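(* For all positive integers $n$ and non-negative integers $k$, $$\det_{0\le i,j\le n-1}\Big(\sum_{l\ge0}\mathcal P^+_{i+j}(k,l)\Big)= \begin{cases} (-1)^{n_1\binom{k+1}2}(xy)^{(k+1)^2\binom{n_1+1}2-n}, & \text{if } n=(k+1)n_1,\\ (-1)^{n_1\binom{k+1}2}(xy)^{(k+1)^2\binom{n_1+1}2}, & \text{if } n=(k+1)n_1+1,\\ 0, & \text{if } n\not\equiv 0,1 \pmod{k+1}. \end{cases}$$ Here $n_1$ denotes a non-negative integer. For $k=0$ (where the first two cases overlap) only the first case applies, i.e. the determinant equals $(xy)^{\binom n2}$.
   Context: Three-step paths consist of up-steps $(1,1)$, level steps $(1,0)$ and down-steps $(1,-1)$. Weights: $w((1,1))=1$, $w((1,0))=x+y$, $w((1,-1))=xy$, and the weight $w(P)$ of a path is the product of the weights of its steps. $\mathcal P_n(k,l)=\sum_P w(P)$ over all three-step paths from $(0,k)$ to $(n,l)$; $\mathcal P^+_n(k,l)$ is the same sum restricted to paths that never run below the $x$-axis. For fixed $n,k$ the sum $\sum_{l\ge0}\mathcal P^+_n(k,l)$ is finite. These are polynomials in the indeterminates $x,y$. *)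

theory Defs
  imports "Jordan_Normal_Form.Determinant"
begin

text \<open>Three-step paths are encoded by their list of step heights:
  1 = up-step (1,1), 0 = level step (1,0), -1 = down-step (1,-1).
  The indeterminates x, y are elements of an arbitrary commutative ring.\<close>

definition step_weight :: "'a::comm_ring_1 \<Rightarrow> 'a \<Rightarrow> int \<Rightarrow> 'a" where
  "step_weight x y s = (if s = 1 then 1 else if s = 0 then x + y else x * y)"

definition path_weight :: "'a::comm_ring_1 \<Rightarrow> 'a \<Rightarrow> int list \<Rightarrow> 'a" where
  "path_weight x y ss = prod_list (map (step_weight x y) ss)"

definition step_seqs :: "nat \<Rightarrow> nat \<Rightarrow> nat \<Rightarrow> int list set" where
  "step_seqs n k l = {ss. length ss = n \<and> set ss \<subseteq> {-1, 0, 1} \<and>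
      int k + sum_list ss = int l}"

definition pos_step_seqs :: "nat \<Rightarrow> nat \<Rightarrow> nat \<Rightarrow> int list set" where
  "pos_step_seqs n k l = {ss \<in> step_seqs n k l.
      \<forall>j \<le> n. int k + sum_list (take j ss) \<ge> 0}"

definition Ppaths :: "'a::comm_ring_1 \<Rightarrow> 'a \<Rightarrow> nat \<Rightarrow> nat \<Rightarrow> nat \<Rightarrow> 'a" where
  "Ppaths x y n k l = (\<Sum>ss\<in>step_seqs n k l. path_weight x y ss)"

definition Ppos :: "'a::comm_ring_1 \<Rightarrow> 'a \<Rightarrow> nat \<Rightarrow> nat \<Rightarrow> nat \<Rightarrow> 'a" where
  "Ppos x y n k l = (\<Sum>ss\<in>pos_step_seqs n k l. path_weight x y ss)"

text \<open>The finite sum over l \<ge> 0 of Ppos: endpoints l > k + n are unreachable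
  (Ppos is 0 there), so the sum is taken over l \<in> {0..k+n}.\<close>
definition Ppos_total :: "'a::comm_ring_1 \<Rightarrow> 'a \<Rightarrow> nat \<Rightarrow> nat \<Rightarrow> 'a" where
  "Ppos_total x y n k = (\<Sum>l = 0..k + n. Ppos x y n k l)"

end

theory Submission
  imports Defs
begin


lemma pos_Suc:
  "pos_step_seqs (Suc m) k l =
     Cons 1 ` pos_step_seqs m (Suc k) l \<union> Cons 0 ` pos_step_seqs m k l \<union>
     (if k > 0 then Cons (-1) ` pos_step_seqs m (k - 1) l else {})"
proof (rule Set.set_eqI)
  fix ss :: "int list"
  show "ss \<in> pos_step_seqs (Suc m) k l \<longleftrightarrow> ss \<in> Cons 1 ` pos_step_seqs m (Suc k) l \<union> Cons 0 ` pos_step_seqs m k l \<union>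
     (if k > 0 then Cons (-1) ` pos_step_seqs m (k - 1) l else {})"
  proof
    assume A: "ss \<in> pos_step_seqs (Suc m) k l"
    then obtain s ss' where ss: "ss = s # ss'" and len: "length ss' = m"
      unfolding pos_step_seqs_def step_seqs_def by (cases ss) auto
    have sset: "s \<in> {-1,0,1}" "set ss' \<subseteq> {-1,0,1}" using A ss unfolding pos_step_seqs_def step_seqs_def by auto
    have sum: "int k + s + sum_list ss' = int l" using A ss unfolding pos_step_seqs_def step_seqs_def by auto
    have pos: "\<forall>j\<le>Suc m. int k + sum_list (take j ss) \<ge> 0" using A unfolding pos_step_seqs_def by auto
    have pos1: "int k + s \<ge> 0" using pos[rule_format, of 1] ss by simp
    have pos2: "\<forall>j\<le>m. int k + s + sum_list (take j ss') \<ge> 0"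
    proof (intro allI impI)
      fix j assume "j \<le> m"
      then show "int k + s + sum_list (take j ss') \<ge> 0" using pos[rule_format, of "Suc j"] ss by simp
    qed
    consider "s = 1" | "s = 0" | "s = -1" using sset by auto
    then show "ss \<in> Cons 1 ` pos_step_seqs m (Suc k) l \<union> Cons 0 ` pos_step_seqs m k l \<union>
     (if k > 0 then Cons (-1) ` pos_step_seqs m (k - 1) l else {})"
    proof cases
      case 1
      have "ss' \<in> pos_step_seqs m (Suc k) l"
        unfolding pos_step_seqs_def step_seqs_def using len sset sum pos2 1 by auto
      then show ?thesis using ss 1 by auto
    next
      case 2
      have "ss' \<in> pos_step_seqs m k l"
        unfolding pos_step_seqs_def step_seqs_def using len sset sum pos2 2 by auto
      then show ?thesis using ss 2 by auto
    next
      case 3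
      have k0: "k > 0" using pos1 3 by auto
      have ik: "int (k - 1) = int k - 1" using k0 by auto
      have "ss' \<in> pos_step_seqs m (k - 1) l"
        unfolding pos_step_seqs_def step_seqs_def using len sset sum pos2 3 ik by auto
      then show ?thesis using ss 3 k0 by auto
    qed
  next
    assume B: "ss \<in> Cons 1 ` pos_step_seqs m (Suc k) l \<union> Cons 0 ` pos_step_seqs m k l \<union>
     (if k > 0 then Cons (-1) ` pos_step_seqs m (k - 1) l else {})"
    have gen: "s # ss' \<in> pos_step_seqs (Suc m) k l"
      if "ss' \<in> pos_step_seqs m k' l" "s \<in> {-1,0,1}" "int k' = int k + s" for s ss' k'
    proof -
      have pos: "\<forall>j\<le>m. int k' + sum_list (take j ss') \<ge> 0" and len: "length ss' = m"
        and st: "set ss' \<subseteq> {-1,0,1}" and sm: "int k' + sum_list ss' = int l"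
        using that(1) unfolding pos_step_seqs_def step_seqs_def by auto
      have "\<forall>j\<le>Suc m. int k + sum_list (take j (s # ss')) \<ge> 0"
      proof (intro allI impI)
        fix j assume j: "j \<le> Suc m"
        show "int k + sum_list (take j (s # ss')) \<ge> 0"
        proof (cases j)
          case 0 then show ?thesis by simp
        next
          case (Suc j')
          then show ?thesis using pos[rule_format, of j'] j that(3) by simp
        qed
      qed
      then show ?thesis unfolding pos_step_seqs_def step_seqs_def using len st sm that by auto
    qed
    show "ss \<in> pos_step_seqs (Suc m) k l"
      using B proof (elim UnE)
      assume "ss \<in> Cons 1 ` pos_step_seqs m (Suc k) l" then show ?thesis using gen[of _ "Suc k" 1] by auto
    next
      assume "ss \<in> Cons 0 ` pos_step_seqs m k l" then show ?thesis using gen[of _ k 0] by auto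
    next
      assume C: "ss \<in> (if k > 0 then Cons (-1) ` pos_step_seqs m (k - 1) l else {})"
      then have k0: "k > 0" by (auto split: if_splits)
      then show ?thesis using C gen[of _ "k - 1" "-1"] by auto
    qed
  qed
qed

lemma finite_step_seqs: "finite (step_seqs n k l)"
proof -
  have "step_seqs n k l \<subseteq> {xs. set xs \<subseteq> {-1,0,1} \<and> length xs = n}"
    unfolding step_seqs_def by auto
  moreover have "finite {xs. set xs \<subseteq> ({-1,0,1}::int set) \<and> length xs = n}"
    by (rule finite_lists_length_eq) auto
  ultimately show ?thesis by (rule finite_subset)
qed

lemma finite_pos: "finite (pos_step_seqs n k l)"
  using finite_step_seqs unfolding pos_step_seqs_def by auto

lemma Ppos_0: "Ppos x y 0 k l = (if k = l then 1 else 0)"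
proof -
  have "pos_step_seqs 0 k l = (if k = l then {[]} else {})"
    unfolding pos_step_seqs_def step_seqs_def by auto
  then show ?thesis unfolding Ppos_def path_weight_def by auto
qed

lemma Ppos_Suc: "Ppos x y (Suc m) k l =
   Ppos x y m (Suc k) l + (x + y) * Ppos x y m k l + (if k > 0 then x * y * Ppos x y m (k - 1) l else 0)"
proof -
  let ?A = "Cons 1 ` pos_step_seqs m (Suc k) l" and ?B = "Cons 0 ` pos_step_seqs m k l"
    and ?C = "(if k > 0 then Cons (-1) ` pos_step_seqs m (k - 1) l else {})"
  have fA: "finite ?A" "finite ?B" "finite ?C" using finite_pos by auto
  have d1: "?A \<inter> ?B = {}" "(?A \<union> ?B) \<inter> ?C = {}" by auto
  have pw: "path_weight x y (s # ss) = step_weight x y s * path_weight x y ss" for s ss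
    unfolding path_weight_def by simp
  have "Ppos x y (Suc m) k l = sum (path_weight x y) (?A \<union> ?B \<union> ?C)"
    unfolding Ppos_def pos_Suc ..
  also have "\<dots> = sum (path_weight x y) ?A + sum (path_weight x y) ?B + sum (path_weight x y) ?C"
    using fA d1 by (simp add: sum.union_disjoint)
  also have "sum (path_weight x y) ?A = Ppos x y m (Suc k) l"
    by (subst sum.reindex) (auto simp: inj_on_def pw step_weight_def Ppos_def)
  also have "sum (path_weight x y) ?B = (x + y) * Ppos x y m k l"
    by (subst sum.reindex) (auto simp: inj_on_def pw step_weight_def Ppos_def sum_distrib_left)
  also have "sum (path_weight x y) ?C = (if k > 0 then x * y * Ppos x y m (k - 1) l else 0)"
    by (cases "k > 0", simp_all, subst sum.reindex) (auto simp: inj_on_def pw step_weight_def Ppos_def sum_distrib_left)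
  finally show ?thesis .
qed

lemma Ppos_big: "l > k + m \<Longrightarrow> Ppos x y m k l = 0"
  by (induction m arbitrary: k) (auto simp: Ppos_0 Ppos_Suc)

definition Cop :: "'a::comm_ring_1 \<Rightarrow> 'a \<Rightarrow> (nat \<Rightarrow> 'a) \<Rightarrow> nat \<Rightarrow> 'a" where
  "Cop x y v = (\<lambda>h. v (Suc h) + (x + y) * v h + (if h > 0 then x * y * v (h - 1) else 0))"

lemma Ppos_sum_Cop:
  "N \<ge> k + m \<Longrightarrow> (\<Sum>l = 0..N. Ppos x y m k l) = ((Cop x y ^^ m) (\<lambda>_. 1)) k"
proof (induction m arbitrary: k N)
  case 0
  then show ?case by (simp add: Ppos_0)
next
  case (Suc m)
  have "(\<Sum>l = 0..N. Ppos x y (Suc m) k l) =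
     (\<Sum>l = 0..N. Ppos x y m (Suc k) l) + (x + y) * (\<Sum>l = 0..N. Ppos x y m k l) +
     (if k > 0 then x * y * (\<Sum>l = 0..N. Ppos x y m (k - 1) l) else 0)"
    by (simp add: Ppos_Suc sum.distrib sum_distrib_left)
  also have "\<dots> = ((Cop x y ^^ m) (\<lambda>_. 1)) (Suc k) + (x + y) * ((Cop x y ^^ m) (\<lambda>_. 1)) k +
     (if k > 0 then x * y * ((Cop x y ^^ m) (\<lambda>_. 1)) (k - 1) else 0)"
    using Suc by auto
  also have "\<dots> = ((Cop x y ^^ Suc m) (\<lambda>_. 1)) k" by (simp add: Cop_def)
  finally show ?case .
qed

lemma Ppos_total_Cop: "Ppos_total x y m k = ((Cop x y ^^ m) (\<lambda>_. 1)) k"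
  unfolding Ppos_total_def by (rule Ppos_sum_Cop) simp



lemma Cop_add: "Cop x y (\<lambda>h. f h + g h) = (\<lambda>h. Cop x y f h + Cop x y g h)"
  by (auto simp: Cop_def algebra_simps)
lemma Cop_smult: "Cop x y (\<lambda>h. c * f h) = (\<lambda>h. c * Cop x y f h)"
  by (auto simp: Cop_def algebra_simps)
lemma Cop_sum: "Cop x y (\<lambda>h. \<Sum>i\<in>A. F i h) = (\<lambda>h. \<Sum>i\<in>A. Cop x y (F i) h)"
  by (auto simp: Cop_def algebra_simps sum.distrib sum_distrib_left)

lemma Cop_pow_add: "(Cop x y ^^ n) (\<lambda>h. f h + g h) = (\<lambda>h. (Cop x y ^^ n) f h + (Cop x y ^^ n) g h)"
  by (induction n) (auto simp: Cop_add)
lemma Cop_pow_smult: "(Cop x y ^^ n) (\<lambda>h. c * f h) = (\<lambda>h. c * (Cop x y ^^ n) f h)"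
  by (induction n) (auto simp: Cop_smult)
lemma Cop_pow_sum: "(Cop x y ^^ n) (\<lambda>h. \<Sum>i\<in>A. F i h) = (\<lambda>h. \<Sum>i\<in>A. (Cop x y ^^ n) (F i) h)"
  by (induction n) (auto simp: Cop_sum)

definition opoly :: "'a::comm_ring_1 \<Rightarrow> 'a \<Rightarrow> 'a poly \<Rightarrow> (nat \<Rightarrow> 'a) \<Rightarrow> nat \<Rightarrow> 'a" where
  "opoly x y p v = (\<lambda>h. \<Sum>i<Suc (degree p). coeff p i * (Cop x y ^^ i) v h)"

lemma opoly_N: assumes "degree p < N"
  shows "opoly x y p v = (\<lambda>h. \<Sum>i<N. coeff p i * (Cop x y ^^ i) v h)"
proof
  fix h
  show "opoly x y p v h = (\<Sum>i<N. coeff p i * (Cop x y ^^ i) v h)"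
    unfolding opoly_def
    by (rule sum.mono_neutral_left) (use assms in \<open>auto simp: coeff_eq_0\<close>)
qed

lemma opoly_add: "opoly x y (p + q) v = (\<lambda>h. opoly x y p v h + opoly x y q v h)"
proof -
  define N where "N = Suc (degree p + degree q)"
  have "degree (p + q) < N" "degree p < N" "degree q < N"
    unfolding N_def using degree_add_le_max[of p q] by auto
  then show ?thesis by (simp add: opoly_N[of _ N] algebra_simps sum.distrib)
qed

lemma opoly_smult: "opoly x y (smult c p) v = (\<lambda>h. c * opoly x y p v h)"
proof -
  define N where "N = Suc (degree p)"
  have "degree (smult c p) < N" "degree p < N"
    unfolding N_def using degree_smult_le[of c p] by auto
  then show ?thesis by (simp add: opoly_N[of _ N] algebra_simps sum_distrib_left)
qed

lemma opoly_minus: "opoly x y (p - q) v = (\<lambda>h. opoly x y p v h - opoly x y q v h)"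
proof -
  define N where "N = Suc (degree p + degree q)"
  have "degree (p - q) < N" "degree p < N" "degree q < N"
    unfolding N_def using degree_diff_le_max[of p q] by auto
  then show ?thesis by (simp add: opoly_N[of _ N] algebra_simps sum_subtractf)
qed

lemma opoly_const: "opoly x y [:c:] v = (\<lambda>h. c * v h)"
  unfolding opoly_def by simp

lemma opoly_one: "opoly x y 1 v = v"
  unfolding opoly_def by simp

lemma opoly_pCons0: "opoly x y (pCons 0 p) v = Cop x y (opoly x y p v)"
proof -
  define N where "N = Suc (degree p)"
  have d: "degree (pCons 0 p) < Suc N" "degree p < N"
    unfolding N_def by (auto simp: degree_pCons_le)
  have "opoly x y (pCons 0 p) v = (\<lambda>h. \<Sum>i<Suc N. coeff (pCons 0 p) i * (Cop x y ^^ i) v h)"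
    by (rule opoly_N[OF d(1)])
  also have "\<dots> = (\<lambda>h. \<Sum>i<N. coeff p i * (Cop x y ^^ Suc i) v h)"
    by (subst sum.lessThan_Suc_shift) simp
  also have "\<dots> = Cop x y (\<lambda>h. \<Sum>i<N. coeff p i * (Cop x y ^^ i) v h)"
    by (simp add: Cop_sum Cop_smult)
  also have "\<dots> = Cop x y (opoly x y p v)" by (simp add: opoly_N[OF d(2)])
  finally show ?thesis .
qed

lemma opoly_lin: "opoly x y [:-c, 1:] v = (\<lambda>h. Cop x y v h - c * v h)"
proof -
  have e: "[:-c, 1:] = pCons 0 1 - [:c:]" by simp
  show ?thesis unfolding e opoly_minus opoly_pCons0 opoly_one opoly_const ..
qed

lemma opoly_mult_lin: "opoly x y ([:-c, 1:] * p) v = (\<lambda>h. Cop x y (opoly x y p v) h - c * opoly x y p v h)"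
proof -
  have "[:-c, 1:] * p = pCons 0 p - smult c p" by (simp add: mult_pCons_left)
  then show ?thesis by (simp add: opoly_minus opoly_pCons0 opoly_smult)
qed

lemma opoly_vadd: "opoly x y p (\<lambda>h. f h + g h) = (\<lambda>h. opoly x y p f h + opoly x y p g h)"
  unfolding opoly_def by (simp add: Cop_pow_add algebra_simps sum.distrib)
lemma opoly_vsmult: "opoly x y p (\<lambda>h. c * f h) = (\<lambda>h. c * opoly x y p f h)"
  unfolding opoly_def by (simp add: Cop_pow_smult algebra_simps sum_distrib_left)
lemma opoly_vsum: "opoly x y p (\<lambda>h. \<Sum>i\<in>A. F i h) = (\<lambda>h. \<Sum>i\<in>A. opoly x y p (F i) h)"
  unfolding opoly_def by (simp add: Cop_pow_sum sum_distrib_left sum.swap[of _ A])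

lemma opoly_commute: "opoly x y p (Cop x y v) = Cop x y (opoly x y p v)"
  unfolding opoly_def Cop_sum Cop_smult by (simp only: funpow_swap1)

lemma opoly_compose:
  assumes "degree p < N" "degree q < N"
  shows "opoly x y p (opoly x y q v) h = (\<Sum>l<N. \<Sum>m<N. coeff p l * coeff q m * (Cop x y ^^ (l + m)) v h)"
  by (simp add: opoly_N[OF assms(1)] opoly_N[OF assms(2)] Cop_pow_sum Cop_pow_smult funpow_add
       sum_distrib_left mult.assoc)



definition lo0 :: "nat \<Rightarrow> 'a::comm_ring_1 \<Rightarrow> nat \<Rightarrow> nat \<Rightarrow> 'a" where
  "lo0 k t j h = (if 1 \<le> j \<and> j \<le> k \<and> h = k - j then t ^ j
     else if k + 2 \<le> j \<and> h = j - (k + 2) then - (t ^ (k + 1)) else 0)"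

definition lo :: "nat \<Rightarrow> 'a::comm_ring_1 \<Rightarrow> nat \<Rightarrow> nat \<Rightarrow> 'a" where
  "lo k t i h = t ^ (i div (2 * k + 2) * (k + 1)) * lo0 k t (i mod (2 * k + 2)) h"

definition corr :: "nat \<Rightarrow> 'a::comm_ring_1 \<Rightarrow> nat \<Rightarrow> 'a" where
  "corr k t i = (if (2 * k + 2) dvd (i + 2) then t ^ ((i + 2) div (2 * k + 2) * (k + 1)) else 0)
     - (if (2 * k + 2) dvd i then t ^ (i div (2 * k + 2) * (k + 1) + 1) else 0)"

definition ind :: "bool \<Rightarrow> 'a::comm_ring_1" where "ind P = (if P then 1 else 0)"

lemma lo_small: "j < 2 * k + 2 \<Longrightarrow> lo k t j h = lo0 k t j h"
  by (simp add: lo_def)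

lemma lo_q: "lo k t (2 * k + 2) h = 0"
  by (simp add: lo_def lo0_def)

lemma lo_q1: "lo k t (2 * k + 3) h = t ^ (k + 1) * lo0 k t 1 h"
proof -
  have "(2 * k + 3) div (2 * k + 2) = 1" "(2 * k + 3) mod (2 * k + 2) = 1"
    by (simp_all add: div_if mod_if)
  then show ?thesis by (simp add: lo_def)
qed

lemma qdiv: "0 < (q::nat) \<Longrightarrow> (i + q) div q = Suc (i div q)" by simp
lemma qmod: "0 < (q::nat) \<Longrightarrow> (i + q) mod q = i mod q" by simp
lemma qdvd: "((q::nat) dvd (i + q)) = (q dvd i)" by simp

lemma lo_period: "lo k t (i + (2 * k + 2)) h = t ^ (k + 1) * lo k t i h"
  unfolding lo_def qdiv[of "2 * k + 2", OF zero_less_Suc[of "2*k+1", unfolded Suc_eq_plus1 add.assoc one_add_one]]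
     qmod[of "2 * k + 2", OF zero_less_Suc[of "2*k+1", unfolded Suc_eq_plus1 add.assoc one_add_one]]
  by (simp add: power_add algebra_simps)

lemma corr_period: "corr k t (i + (2 * k + 2)) = t ^ (k + 1) * corr k t i"
proof -
  have a: "(i + (2 * k + 2) + 2) = (i + 2) + (2 * k + 2)" by simp
  have q: "0 < 2 * k + 2" by simp
  have b: "(2 * k + 2) dvd (i + (2 * k + 2) + 2) \<longleftrightarrow> (2 * k + 2) dvd (i + 2)"
    unfolding a by (rule qdvd)
  have c: "(2 * k + 2) dvd (i + (2 * k + 2)) \<longleftrightarrow> (2 * k + 2) dvd i" by (rule qdvd)
  have d: "(i + (2 * k + 2) + 2) div (2 * k + 2) = Suc ((i + 2) div (2 * k + 2))"
    unfolding a by (rule qdiv[OF q])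
  have e: "(i + (2 * k + 2)) div (2 * k + 2) = Suc (i div (2 * k + 2))" by (rule qdiv[OF q])
  show ?thesis unfolding corr_def b c d e by (simp add: power_add algebra_simps)
qed

lemma corr_small: "i < 2 * k + 2 \<Longrightarrow> corr k t i = (if i = 2 * k then t ^ (k + 1) else 0) - (if i = 0 then t else 0)"
proof -
  assume i: "i < 2 * k + 2"
  have 1: "(2 * k + 2) dvd (i + 2) \<longleftrightarrow> i = 2 * k"
  proof
    assume "(2 * k + 2) dvd (i + 2)"
    then obtain c where c: "i + 2 = (2 * k + 2) * c" by (auto elim: dvdE)
    then have "c \<ge> 1" by (cases c) auto
    moreover have "c < 2" using c i by (cases c; cases "c - 1") auto
    ultimately have "c = 1" by auto
    then show "i = 2 * k" using c by simp
  qed auto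
  have 2: "(2 * k + 2) dvd i \<longleftrightarrow> i = 0"
    using i by (auto elim: dvdE simp: dvd_imp_le) (metis dvd_imp_le le_less_trans less_irrefl not_gr0)
  show ?thesis unfolding corr_def 1 2 using i by auto
qed


lemma L1: "1 \<le> j \<Longrightarrow> j \<le> k \<Longrightarrow> lo0 k t j h' = (if h' = k - j then t ^ j else 0)"
  by (simp add: lo0_def)
lemma L2: "k + 2 \<le> j \<Longrightarrow> lo0 k t j h' = (if h' + (k + 2) = j then - (t ^ (k + 1)) else 0)"
  by (auto simp: lo0_def)
lemma L0: "j = 0 \<or> j = k + 1 \<Longrightarrow> lo0 k t j h' = 0" by (auto simp: lo0_def)

abbreviation RHS where "RHS k t i h c \<equiv> (if h > 0 then lo0 k t (i + 1) (h - 1) else 0) + t * lo0 k t (i + 1) (h + 1)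
      - t * lo0 k t i h + c * (if h = k then 1 else 0)"

lemma caseA: assumes "i = 0" "k = 1" shows "lo0 k t (i + 2) h = RHS k t i h (if i = 0 then - t else 0)"
  using assms by (auto simp: lo0_def)

lemma caseB: assumes "i = 0" "k \<ge> 2" shows "lo0 k t (i + 2) h = RHS k t i h (if i = 0 then - t else 0)"
proof -
  have i0: "(if i = 0 then - t else (0::'a)) = - t" using assms by simp
  have a: "lo0 k t (i + 2) h = (if h = k - 2 then t * t else 0)" using assms by (auto simp: L1 power2_eq_square numeral_2_eq_2)
  have b: "lo0 k t (i + 1) h' = (if h' = k - 1 then t else 0)" for h' using assms by (simp add: L1)
  have c: "lo0 k t i h = 0" using assms by (simp add: L0)
  consider "h = k - 2" | "h = k" | "h \<noteq> k - 2" "h \<noteq> k" by blast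
  then show ?thesis
  proof cases
    case 1
    then have "\<not> (h > 0 \<and> h - 1 = k - 1)" "h + 1 = k - 1" "h \<noteq> k" using assms by auto
    then show ?thesis unfolding a b c i0 using 1 by simp
  next
    case 2
    then have "h > 0 \<and> h - 1 = k - 1" "h + 1 \<noteq> k - 1" "h \<noteq> k - 2" using assms by auto
    then show ?thesis unfolding a b c i0 using 2 by simp
  next
    case 3
    then have "\<not> (h > 0 \<and> h - 1 = k - 1)" "h + 1 \<noteq> k - 1" using assms by auto
    then show ?thesis unfolding a b c i0 using 3 by auto
  qed
qed

lemma caseC: assumes "1 \<le> i" "i + 2 \<le> k" shows "lo0 k t (i + 2) h = RHS k t i h (if i = 0 then - t else 0)"
proof -
  have i0: "(if i = 0 then - t else (0::'a)) = 0" using assms by simp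
  have a: "lo0 k t (i + 2) h = (if h = k - (i + 2) then t ^ (i + 2) else 0)" using assms by (simp add: L1)
  have b: "lo0 k t (i + 1) h' = (if h' = k - (i + 1) then t ^ (i + 1) else 0)" for h' using assms by (simp add: L1)
  have c: "lo0 k t i h = (if h = k - i then t ^ i else 0)" using assms by (simp add: L1)
  consider "h = k - (i + 2)" | "h = k - i" | "h \<noteq> k - (i + 2)" "h \<noteq> k - i" by blast
  then show ?thesis
  proof cases
    case 1
    then have "\<not> (h > 0 \<and> h - 1 = k - (i + 1))" "h + 1 = k - (i + 1)" "h \<noteq> k - i" using assms by auto
    then show ?thesis unfolding a b c i0 using 1 by (simp add: power_add power2_eq_square algebra_simps)
  next
    case 2
    then have "h > 0 \<and> h - 1 = k - (i + 1)" "h + 1 \<noteq> k - (i + 1)" "h \<noteq> k - (i + 2)" using assms by auto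
    then show ?thesis unfolding a b c i0 using 2 by (simp add: power_add power2_eq_square algebra_simps)
  next
    case 3
    then have "\<not> (h > 0 \<and> h - 1 = k - (i + 1))" "h + 1 \<noteq> k - (i + 1)" using assms by auto
    then show ?thesis unfolding a b c i0 using 3 by auto
  qed
qed

lemma caseD: assumes "1 \<le> i" "i + 1 = k" shows "lo0 k t (i + 2) h = RHS k t i h (if i = 0 then - t else 0)"
proof -
  have i0: "(if i = 0 then - t else (0::'a)) = 0" using assms by simp
  have a: "lo0 k t (i + 2) h = 0" using assms by (simp add: L0)
  have b: "lo0 k t (i + 1) h' = (if h' = 0 then t ^ (i + 1) else 0)" for h' using assms by (simp add: L1)
  have ki: "k - i = 1" using assms by simp
  have c: "lo0 k t i h = (if h = 1 then t ^ i else 0)" using assms by (simp add: L1 ki)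
  consider "h = 1" | "h \<noteq> 1" by blast
  then show ?thesis
  proof cases
    case 1
    then show ?thesis unfolding a b c i0 using 1 by (simp add: power_add algebra_simps)
  next
    case 2
    then have "\<not> (h > 0 \<and> h - 1 = 0)" by auto
    then show ?thesis unfolding a b c i0 using 2 by auto
  qed
qed

lemma caseE: assumes "i = k" "k \<ge> 1" shows "lo0 k t (i + 2) h = RHS k t i h (if i = 0 then - t else 0)"
proof -
  have i0: "(if i = 0 then - t else (0::'a)) = 0" using assms by simp
  have a: "lo0 k t (i + 2) h = (if h = 0 then - (t ^ (k + 1)) else 0)" using assms by (simp add: L2)
  have b: "lo0 k t (i + 1) h' = 0" for h' using assms by (simp add: L0)
  have c: "lo0 k t i h = (if h = 0 then t ^ k else 0)" using assms by (simp add: L1)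
  show ?thesis unfolding a b c i0 by simp
qed

lemma caseF: assumes "i = k + 1" "k \<ge> 2" shows "lo0 k t (i + 2) h = RHS k t i h (if i = 0 then - t else 0)"
proof -
  have i0: "(if i = 0 then - t else (0::'a)) = 0" using assms by simp
  have a: "lo0 k t (i + 2) h = (if h = 1 then - (t ^ (k + 1)) else 0)" using assms by (auto simp: L2)
  have b: "lo0 k t (i + 1) h' = (if h' = 0 then - (t ^ (k + 1)) else 0)" for h' using assms by (simp add: L2)
  have c: "lo0 k t i h = 0" using assms by (simp add: L0)
  consider "h = 1" | "h \<noteq> 1" by blast
  then show ?thesis
  proof cases
    case 1
    then show ?thesis unfolding a b c i0 by simp
  next
    case 2
    then have "\<not> (h > 0 \<and> h - 1 = 0)" by auto
    then show ?thesis unfolding a b c i0 using 2 by auto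
  qed
qed

lemma caseG: assumes "k + 2 \<le> i" shows "lo0 k t (i + 2) h = RHS k t i h (if i = 0 then - t else 0)"
proof -
  have i0: "(if i = 0 then - t else (0::'a)) = 0" using assms by simp
  let ?T = "- (t ^ (k + 1))"
  have a: "lo0 k t (i + 2) h = (if h + (k + 2) = i + 2 then ?T else 0)" using assms by (simp add: L2)
  have b: "lo0 k t (i + 1) h' = (if h' + (k + 2) = i + 1 then ?T else 0)" for h' using assms by (simp add: L2)
  have c: "lo0 k t i h = (if h + (k + 2) = i then ?T else 0)" using assms by (simp add: L2)
  consider "h + (k + 2) = i + 2" | "h + (k + 2) = i" | "h + (k + 2) \<noteq> i + 2" "h + (k + 2) \<noteq> i" by blast
  then show ?thesis
  proof cases
    case 1
    then have "h > 0 \<and> h - 1 + (k + 2) = i + 1" "h + 1 + (k + 2) \<noteq> i + 1" "h + (k + 2) \<noteq> i" using assms by auto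
    then show ?thesis unfolding a b c i0 using 1 by simp
  next
    case 2
    then have "\<not> (h > 0 \<and> h - 1 + (k + 2) = i + 1)" "h + 1 + (k + 2) = i + 1" by auto
    then show ?thesis unfolding a b c i0 using 2 by simp
  next
    case 3
    then have "\<not> (h > 0 \<and> h - 1 + (k + 2) = i + 1)" "h + 1 + (k + 2) \<noteq> i + 1" by auto
    then show ?thesis unfolding a b c i0 using 3 by auto
  qed
qed

lemma caseH1: "i = 2 \<Longrightarrow> k = 1 \<Longrightarrow> RHS k t i h (t ^ (k + 1)) = 0"
  by (auto simp: lo0_def power2_eq_square)

lemma caseH2: assumes "k \<ge> 2" "i = 2 * k" shows "RHS k t i h (t ^ (k + 1)) = 0"
proof -
  let ?T = "- (t ^ (k + 1))"
  have b: "lo0 k t (i + 1) h' = (if h' = k - 1 then ?T else 0)" for h' using assms by (auto simp: L2)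
  have c: "lo0 k t i h = (if h = k - 2 then ?T else 0)" using assms by (auto simp: L2)
  consider "h = k" | "h = k - 2" | "h \<noteq> k" "h \<noteq> k - 2" by blast
  then show ?thesis
  proof cases
    case 1
    then have "h > 0 \<and> h - 1 = k - 1" "h + 1 \<noteq> k - 1" "h \<noteq> k - 2" using assms by auto
    then show ?thesis unfolding b c using 1 by simp
  next
    case 2
    then have "\<not> (h > 0 \<and> h - 1 = k - 1)" "h + 1 = k - 1" "h \<noteq> k" using assms by auto
    then show ?thesis unfolding b c using 2 by simp
  next
    case 3
    then have "\<not> (h > 0 \<and> h - 1 = k - 1)" "h + 1 \<noteq> k - 1" using assms by auto
    then show ?thesis unfolding b c using 3 by auto
  qed
qed

lemma caseI: assumes "k \<ge> 1" "i = 2 * k + 1" shows "t ^ (k + 1) * lo0 k t 1 h = - t * lo0 k t i h"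
proof -
  have b: "lo0 k t i h = (if h = k - 1 then - (t ^ (k + 1)) else 0)" using assms by (auto simp: L2)
  have c: "lo0 k t 1 h = (if h = k - 1 then t else 0)" using assms by (simp add: L1)
  show ?thesis unfolding b c by (simp add: algebra_simps)
qed

lemma lo_rec_small:
  assumes i: "i < 2 * k + 2"
  shows "lo k t (i + 2) h = (if h > 0 then lo k t (i + 1) (h - 1) else 0) + t * lo k t (i + 1) (h + 1)
      - t * lo k t i h + corr k t i * (if h = k then 1 else 0)"
proof -
  have c: "corr k t i = (if i = 2 * k then t ^ (k + 1) else 0) - (if i = 0 then t else 0)"
    using i by (rule corr_small)
  consider "i + 2 < 2 * k + 2" | "i = 2 * k" | "i = 2 * k + 1" using i by linarith
  then show ?thesis
  proof cases
    case 1
    then have e: "lo k t (i + 2) h' = lo0 k t (i + 2) h'" "lo k t (i + 1) h' = lo0 k t (i + 1) h'"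
      "lo k t i h' = lo0 k t i h'" for h' by (simp_all add: lo_small)
    have c0: "corr k t i = (if i = 0 then - t else 0)" using c 1 by auto
    consider "i = 0" "k = 1" | "i = 0" "k \<ge> 2" | "1 \<le> i" "i + 2 \<le> k" | "1 \<le> i" "i + 1 = k" | "i = k" "k \<ge> 1"
      | "i = k + 1" "k \<ge> 2" | "k + 2 \<le> i" using 1 by linarith
    then show ?thesis
    proof cases
      case 1 show ?thesis unfolding e c0 by (rule caseA[OF 1])
    next
      case 2 show ?thesis unfolding e c0 by (rule caseB[OF 2])
    next
      case 3 show ?thesis unfolding e c0 by (rule caseC[OF 3])
    next
      case 4 show ?thesis unfolding e c0 by (rule caseD[OF 4])
    next
      case 5 show ?thesis unfolding e c0 by (rule caseE[OF 5])
    next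
      case 6 show ?thesis unfolding e c0 by (rule caseF[OF 6])
    next
      case 7 show ?thesis unfolding e c0 by (rule caseG[OF 7])
    qed
  next
    case 2
    then have e: "lo k t (i + 2) h' = 0" "lo k t (i + 1) h' = lo0 k t (i + 1) h'"
      "lo k t i h' = lo0 k t i h'" for h' using lo_q[of k t h'] by (simp_all add: lo_small)
    consider "k = 0" | "k = 1" | "k \<ge> 2" by linarith
    then show ?thesis
    proof cases
      case 1
      then show ?thesis unfolding e c using 2 by (simp add: lo0_def)
    next
      case 2
      have i2: "i = 2" using \<open>i = 2 * k\<close> 2 by simp
      have cc: "(if i = 2 * k then t ^ (k + 1) else 0) - (if i = 0 then t else 0) = t ^ (k + 1)" using i2 2 by simp
      show ?thesis unfolding e c cc by (rule sym[OF caseH1[OF i2 2]])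
    next
      case 3
      have cc: "(if i = 2 * k then t ^ (k + 1) else 0) - (if i = 0 then t else 0) = t ^ (k + 1)" using \<open>i = 2 * k\<close> 3 by simp
      show ?thesis unfolding e c cc by (rule sym[OF caseH2[OF 3 \<open>i = 2 * k\<close>]])
    qed
  next
    case 3
    have i2: "i + 2 = 2 * k + 3" "i + 1 = 2 * k + 2" using 3 by simp_all
    have e1: "lo k t (i + 2) h' = t ^ (k + 1) * lo0 k t 1 h'" for h' unfolding i2(1) by (rule lo_q1)
    have e2: "lo k t (i + 1) h' = 0" for h' unfolding i2(2) by (rule lo_q)
    have e3: "lo k t i h' = lo0 k t i h'" for h' using 3 by (simp add: lo_small)
    note e = e1 e2 e3
    show ?thesis
    proof (cases "k = 0")
      case True
      then show ?thesis unfolding e c using 3 by (simp add: lo0_def)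
    next
      case False
      then have k1: "k \<ge> 1" by simp
      show ?thesis unfolding e c using caseI[OF k1 3] 3 by simp
    qed
  qed
qed



lemma lo_rec:
  "lo k t (i + 2) h = (if h > 0 then lo k t (i + 1) (h - 1) else 0) + t * lo k t (i + 1) (h + 1)
      - t * lo k t i h + corr k t i * (if h = k then 1 else 0)"
proof (induction i arbitrary: h rule: less_induct)
  case (less i)
  show ?case
  proof (cases "i < 2 * k + 2")
    case True
    then show ?thesis by (rule lo_rec_small)
  next
    case False
    define j where "j = i - (2 * k + 2)"
    have ij: "i = j + (2 * k + 2)" using False j_def by simp
    have jl: "j < i" using ij by simp
    have a: "i + 2 = (j + 2) + (2 * k + 2)" "i + 1 = (j + 1) + (2 * k + 2)" using ij by simp_all
    show ?thesis unfolding a unfolding ij lo_period corr_period less.IH[OF jl]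
      by (simp add: algebra_simps)
  qed
qed

definition rc :: "nat \<Rightarrow> 'a::comm_ring_1 \<Rightarrow> nat \<Rightarrow> nat \<Rightarrow> 'a" where
  "rc k t i h = (if h = k + i then 1 else 0) + lo k t i h"

lemma rc_rec:
  "rc k t (i + 2) h = (if h > 0 then rc k t (i + 1) (h - 1) else 0) + t * rc k t (i + 1) (h + 1)
      - t * rc k t i h + corr k t i * (if h = k then 1 else 0)"
proof -
  have hi: "(if h = k + (i + 2) then 1 else 0 :: 'a) = (if h > 0 then (if h - 1 = k + (i + 1) then 1 else 0) else 0)
     + t * (if h + 1 = k + (i + 1) then 1 else 0) - t * (if h = k + i then 1 else 0)"
    by auto
  show ?thesis unfolding rc_def hi lo_rec[of k t i h] by (simp add: algebra_simps)
qed

fun Pp :: "'a::comm_ring_1 \<Rightarrow> 'a \<Rightarrow> nat \<Rightarrow> nat \<Rightarrow> 'a poly" where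
  "Pp x y k 0 = 1"
| "Pp x y k (Suc 0) = [:-(x + y), 1:]"
| "Pp x y k (Suc (Suc i)) = [:-(x + y), 1:] * Pp x y k (Suc i) - smult (x * y) (Pp x y k i)
     + [: corr k (x * y) i :]"

lemma deg_lin_mult: fixes c :: "'a::comm_ring_1" assumes "degree p \<le> n" shows "degree ([:-c, 1:] * p) \<le> Suc n"
proof -
  have "degree ([:-c, 1:] * p) \<le> degree [:-c, 1:] + degree p" by (rule degree_mult_le)
  moreover have "degree [:-c, 1:] \<le> 1" by (rule order.trans[OF degree_pCons_le]) simp
  ultimately show ?thesis using assms by linarith
qed

lemma coeff_lin_mult: fixes c :: "'a::comm_ring_1" shows "coeff ([:-c, 1:] * p) (Suc n) = coeff p n - c * coeff p (Suc n)"
  by (simp add: mult_pCons_left algebra_simps)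

lemma Pp_deg: "degree (Pp x y k i) \<le> i \<and> coeff (Pp x y k i) i = 1"
proof (induction i rule: nat_less_induct)
  case (1 i)
  consider "i = 0" | "i = 1" | j where "i = Suc (Suc j)" by (metis not0_implies_Suc One_nat_def)
  then show ?case
  proof cases
    case 1 then show ?thesis by simp
  next
    case 2 then show ?thesis by (simp add: degree_pCons_le)
  next
    case 3
    let ?P1 = "Pp x y k (Suc j)" and ?P0 = "Pp x y k j"
    have IH1: "degree ?P1 \<le> Suc j" "coeff ?P1 (Suc j) = 1" using 1 3 by auto
    have IH0: "degree ?P0 \<le> j" "coeff ?P0 j = 1" using 1 3 by auto
    have d1: "degree ([:-(x + y), 1:] * ?P1) \<le> Suc (Suc j)" by (rule deg_lin_mult[OF IH1(1)])
    have d2: "degree (smult (x * y) ?P0) \<le> Suc (Suc j)" using IH0 degree_smult_le[of "x*y" ?P0] by simp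
    have d3: "degree [: corr k (x * y) j :] \<le> Suc (Suc j)" by simp
    have d: "degree (Pp x y k (Suc (Suc j))) \<le> Suc (Suc j)"
      using d1 d2 d3 by (auto intro!: degree_add_le degree_diff_le)
    have c1: "coeff ?P1 (Suc (Suc j)) = 0" using IH1 by (intro coeff_eq_0) auto
    have c0: "coeff ?P0 (Suc (Suc j)) = 0" using IH0 by (intro coeff_eq_0) auto
    have "coeff (Pp x y k (Suc (Suc j))) (Suc (Suc j)) = 1"
      using IH1 c1 c0 by (simp add: coeff_lin_mult)
    then show ?thesis using d 3 by simp
  qed
qed

definition del :: "nat \<Rightarrow> nat \<Rightarrow> 'a::comm_ring_1" where "del h = (\<lambda>g. if g = h then 1 else 0)"

lemma Cop_del: "Cop x y (del h) = (\<lambda>g. (if h > 0 then del (h - 1) g else 0) + (x + y) * del h g + x * y * del (h + 1) g)"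
proof
  fix g show "Cop x y (del h) g = (if h > 0 then del (h - 1) g else 0) + (x + y) * del h g + x * y * del (h + 1) g"
    by (cases h) (auto simp: Cop_def del_def)
qed

definition rr :: "'a::comm_ring_1 \<Rightarrow> 'a \<Rightarrow> nat \<Rightarrow> nat \<Rightarrow> nat \<Rightarrow> 'a" where
  "rr x y k i h = opoly x y (Pp x y k i) (del h) k"

lemma Cop_pow_zero: "(Cop x y ^^ i) (\<lambda>g. 0) = (\<lambda>g. 0)"
  by (induction i) (auto simp: Cop_def)

lemma opoly_zero: "opoly x y p (\<lambda>g. 0) = (\<lambda>g. 0)"
  unfolding opoly_def by (simp add: Cop_pow_zero)

lemma opoly_Cop_del: "opoly x y p (Cop x y (del h)) g =
   (if h > 0 then opoly x y p (del (h - 1)) g else 0) + (x + y) * opoly x y p (del h) g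
    + x * y * opoly x y p (del (h + 1)) g"
proof -
  have "Cop x y (del h) = (\<lambda>g. (if h > 0 then del (h - 1) g else 0) + ((x + y) * del h g + x * y * del (h + 1) g))"
    unfolding Cop_del by (simp add: algebra_simps)
  moreover have "opoly x y p (\<lambda>g. if h > 0 then del (h - 1) g else 0) = (\<lambda>g. if h > 0 then opoly x y p (del (h - 1)) g else 0)"
    by (cases "h > 0") (auto simp: opoly_zero)
  ultimately show ?thesis by (simp add: opoly_vadd opoly_vsmult)
qed

lemma rr_rec: "rr x y k (i + 2) h = (if h > 0 then rr x y k (i + 1) (h - 1) else 0)
    + x * y * rr x y k (i + 1) (h + 1) - x * y * rr x y k i h + corr k (x * y) i * (if h = k then 1 else 0)"
proof -
  have e: "i + 2 = Suc (Suc i)" "i + 1 = Suc i" by simp_all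
  show ?thesis
    unfolding rr_def e Pp.simps opoly_add opoly_minus opoly_smult opoly_const opoly_mult_lin
      opoly_commute[symmetric] opoly_Cop_del
    by (simp add: del_def algebra_simps)
qed

lemma rr_rc: "rr x y k i h = rc k (x * y) i h"
proof (induction i arbitrary: h rule: nat_less_induct)
  case (1 i)
  consider "i = 0" | "i = 1" | j where "i = j + 2" by (metis add_2_eq_Suc' not0_implies_Suc One_nat_def)
  then show ?case
  proof cases
    case 1
    then show ?thesis by (simp add: rr_def opoly_one rc_def lo_def lo0_def del_def)
  next
    case 2
    have "rr x y k 1 h = Cop x y (del h) k - (x + y) * del h k"
      unfolding rr_def One_nat_def Pp.simps opoly_lin ..
    then show ?thesis using 2 by (auto simp: rc_def lo_def lo0_def del_def Cop_def)
  next
    case 3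
    have e1: "rr x y k (j + 1) h' = rc k (x * y) (j + 1) h'" for h' using 1 3 by auto
    have e0: "rr x y k j h' = rc k (x * y) j h'" for h' using 1 3 by auto
    have "rr x y k (j + 2) h = rc k (x * y) (j + 2) h"
      unfolding rr_rec rc_rec e1 e0 ..
    then show ?thesis using 3 by simp
  qed
qed



fun Qh :: "'a::comm_ring_1 \<Rightarrow> 'a \<Rightarrow> nat \<Rightarrow> 'a poly" where
  "Qh x y 0 = 1"
| "Qh x y (Suc 0) = [:-(x + y), 1:]"
| "Qh x y (Suc (Suc h)) = [:-(x + y), 1:] * Qh x y (Suc h) - smult (x * y) (Qh x y h)"

fun Qc :: "'a::comm_ring_1 \<Rightarrow> 'a \<Rightarrow> nat \<Rightarrow> 'a poly" where
  "Qc x y 0 = 1"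
| "Qc x y (Suc j) = [:-(1 + x + y + x * y), 1:] * Qh x y j"

lemma Qh_deg: "degree (Qh x y i) \<le> i \<and> coeff (Qh x y i) i = 1"
proof (induction i rule: nat_less_induct)
  case (1 i)
  consider "i = 0" | "i = 1" | j where "i = Suc (Suc j)" by (metis not0_implies_Suc One_nat_def)
  then show ?case
  proof cases
    case 1 then show ?thesis by simp
  next
    case 2 then show ?thesis by (simp add: degree_pCons_le)
  next
    case 3
    let ?P1 = "Qh x y (Suc j)" and ?P0 = "Qh x y j"
    have IH1: "degree ?P1 \<le> Suc j" "coeff ?P1 (Suc j) = 1" using 1 3 by auto
    have IH0: "degree ?P0 \<le> j" "coeff ?P0 j = 1" using 1 3 by auto
    have d1: "degree ([:-(x + y), 1:] * ?P1) \<le> Suc (Suc j)" by (rule deg_lin_mult[OF IH1(1)])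
    have d2: "degree (smult (x * y) ?P0) \<le> Suc (Suc j)" using IH0 degree_smult_le[of "x*y" ?P0] by simp
    have d: "degree (Qh x y (Suc (Suc j))) \<le> Suc (Suc j)"
      using d1 d2 by (auto intro!: degree_diff_le)
    have c1: "coeff ?P1 (Suc (Suc j)) = 0" using IH1 by (intro coeff_eq_0) auto
    have c0: "coeff ?P0 (Suc (Suc j)) = 0" using IH0 by (intro coeff_eq_0) auto
    have "coeff (Qh x y (Suc (Suc j))) (Suc (Suc j)) = 1"
      using IH1 c1 c0 by (simp add: coeff_lin_mult)
    then show ?thesis using d 3 by simp
  qed
qed

lemma Qc_deg: "degree (Qc x y j) \<le> j \<and> coeff (Qc x y j) j = 1"
proof (cases j)
  case 0 then show ?thesis by simp
next
  case (Suc j')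
  have IH: "degree (Qh x y j') \<le> j'" "coeff (Qh x y j') j' = 1" using Qh_deg by auto
  have c: "coeff (Qh x y j') (Suc j') = 0" using IH by (intro coeff_eq_0) auto
  have "degree (Qc x y (Suc j')) \<le> Suc j'" unfolding Qc.simps by (rule deg_lin_mult[OF IH(1)])
  moreover have "coeff (Qc x y (Suc j')) (Suc j') = 1" unfolding Qc.simps coeff_lin_mult using IH c by simp
  ultimately show ?thesis using Suc by simp
qed

lemma opoly_Qh: "opoly x y (Qh x y h) (del 0) = (\<lambda>g. (x * y) ^ h * del h g)"
proof (induction h rule: nat_less_induct)
  case (1 h)
  consider "h = 0" | "h = 1" | j where "h = Suc (Suc j)" by (metis not0_implies_Suc One_nat_def)
  then show ?case
  proof cases
    case 1 then show ?thesis by (simp add: opoly_one)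
  next
    case 2
    have "opoly x y (Qh x y 1) (del 0) = (\<lambda>g. Cop x y (del 0) g - (x + y) * del 0 g)"
      unfolding One_nat_def Qh.simps opoly_lin ..
    then show ?thesis using 2 by (auto simp: del_def Cop_def)
  next
    case 3
    have IH1: "opoly x y (Qh x y (Suc j)) (del 0) = (\<lambda>g. (x * y) ^ Suc j * del (Suc j) g)"
      using 1 3 by auto
    have IH0: "opoly x y (Qh x y j) (del 0) = (\<lambda>g. (x * y) ^ j * del j g)"
      using 1 3 by auto
    show ?thesis unfolding 3 Qh.simps opoly_minus opoly_mult_lin opoly_smult IH1 IH0 Cop_smult Cop_del
      by (simp add: algebra_simps)
  qed
qed

lemma Cop_diff: "Cop x y (\<lambda>h. f h - g h) = (\<lambda>h. Cop x y f h - Cop x y g h)"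
  by (auto simp: Cop_def algebra_simps)
lemma Cop_pow_diff: "(Cop x y ^^ n) (\<lambda>h. f h - g h) = (\<lambda>h. (Cop x y ^^ n) f h - (Cop x y ^^ n) g h)"
  by (induction n) (auto simp: Cop_diff)
lemma opoly_vdiff: "opoly x y p (\<lambda>h. f h - g h) = (\<lambda>h. opoly x y p f h - opoly x y p g h)"
  unfolding opoly_def by (simp add: Cop_pow_diff algebra_simps sum_subtractf)

definition ones :: "nat \<Rightarrow> 'a::comm_ring_1" where "ones = (\<lambda>_. 1)"

lemma opoly_Qc: "opoly x y (Qc x y (Suc j)) ones = (\<lambda>g. - ((x * y) ^ Suc j) * del j g)"
proof -
  have a: "(\<lambda>g. Cop x y ones g - (1 + x + y + x * y) * ones g) = (\<lambda>g. - (x * y) * del 0 g)"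
    by (auto simp: Cop_def ones_def del_def)
  have "opoly x y (Qc x y (Suc j)) ones
     = (\<lambda>g. opoly x y (Qh x y j) (Cop x y ones) g - (1 + x + y + x * y) * opoly x y (Qh x y j) ones g)"
    unfolding Qc.simps opoly_mult_lin opoly_commute ..
  also have "\<dots> = opoly x y (Qh x y j) (\<lambda>g. Cop x y ones g - (1 + x + y + x * y) * ones g)"
    by (simp add: opoly_vdiff opoly_vsmult)
  also have "\<dots> = (\<lambda>g. - ((x * y) ^ Suc j) * del j g)"
    unfolding a opoly_vsmult opoly_Qh by (simp add: algebra_simps)
  finally show ?thesis .
qed

lemma Cop_pow_local: "(\<forall>g' \<le> g + m. v g' = w g') \<Longrightarrow> (Cop x y ^^ m) v g = (Cop x y ^^ m) w g"
proof (induction m arbitrary: g)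
  case 0 then show ?case by simp
next
  case (Suc m)
  have a: "(Cop x y ^^ m) v (Suc g) = (Cop x y ^^ m) w (Suc g)" using Suc by auto
  have b: "(Cop x y ^^ m) v g = (Cop x y ^^ m) w g" using Suc by auto
  have c: "g > 0 \<Longrightarrow> (Cop x y ^^ m) v (g - 1) = (Cop x y ^^ m) w (g - 1)" using Suc by auto
  show ?case unfolding funpow.simps comp_def Cop_def[of x y "(Cop x y ^^ m) v"] Cop_def[of x y "(Cop x y ^^ m) w"]
    using a b c by simp
qed

lemma opoly_local: "(\<forall>g' \<le> g + degree p. v g' = w g') \<Longrightarrow> opoly x y p v g = opoly x y p w g"
  unfolding opoly_def by (intro sum.cong refl arg_cong2[where f="(*)"] Cop_pow_local) auto

lemma opoly_one_sum: assumes "k + degree p \<le> N"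
  shows "opoly x y p ones k = (\<Sum>h = 0..N. opoly x y p (del h) k)"
proof -
  have "opoly x y p ones k = opoly x y p (\<lambda>g. \<Sum>h = 0..N. del h g) k"
    by (rule opoly_local) (use assms in \<open>auto simp: ones_def del_def\<close>)
  also have "\<dots> = (\<Sum>h = 0..N. opoly x y p (del h) k)" by (simp add: opoly_vsum)
  finally show ?thesis .
qed



definition Lm :: "'a::comm_ring_1 \<Rightarrow> 'a \<Rightarrow> nat \<Rightarrow> nat \<Rightarrow> 'a mat" where
  "Lm x y k n = mat n n (\<lambda>(i, l). coeff (Pp x y k i) l)"
definition Um :: "'a::comm_ring_1 \<Rightarrow> 'a \<Rightarrow> nat \<Rightarrow> 'a mat" where
  "Um x y n = mat n n (\<lambda>(m, j). coeff (Qc x y j) m)"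
definition Hm :: "'a::comm_ring_1 \<Rightarrow> 'a \<Rightarrow> nat \<Rightarrow> nat \<Rightarrow> 'a mat" where
  "Hm x y k n = mat n n (\<lambda>(i, j). Ppos_total x y (i + j) k)"
definition Gv :: "'a::comm_ring_1 \<Rightarrow> 'a \<Rightarrow> nat \<Rightarrow> nat \<Rightarrow> nat \<Rightarrow> 'a" where
  "Gv x y k i j = opoly x y (Pp x y k i) (opoly x y (Qc x y j) ones) k"

lemma det_Lm: "det (Lm x y k n) = 1"
proof -
  have "det (Lm x y k n) = prod_list (diag_mat (Lm x y k n))"
  proof (rule det_lower_triangular[of n])
    fix i j assume "i < j" "j < n"
    then show "Lm x y k n $$ (i, j) = 0"
      using Pp_deg[of x y k i] by (auto simp: Lm_def intro: coeff_eq_0)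
  qed (simp add: Lm_def)
  also have "\<dots> = 1" unfolding prod_list_diag_prod
    by (rule prod.neutral) (auto simp: Lm_def Pp_deg)
  finally show ?thesis .
qed

lemma det_Um: "det (Um x y n) = 1"
proof -
  have "det (Um x y n) = prod_list (diag_mat (Um x y n))"
  proof (rule det_upper_triangular[of _ n])
    show "upper_triangular (Um x y n)"
    proof
      fix i j assume "j < i" "i < dim_row (Um x y n)"
      then show "Um x y n $$ (i, j) = 0"
        using Qc_deg[of x y j] by (auto simp: Um_def intro: coeff_eq_0)
    qed
  qed (simp add: Um_def)
  also have "\<dots> = 1" unfolding prod_list_diag_prod
    by (rule prod.neutral) (auto simp: Um_def Qc_deg)
  finally show ?thesis .
qed

lemma LHU: "Lm x y k n * Hm x y k n * Um x y n = mat n n (\<lambda>(i, j). Gv x y k i j)"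
proof (rule eq_matI)
  fix i j assume ij: "i < dim_row (mat n n (\<lambda>(i, j). Gv x y k i j))" "j < dim_col (mat n n (\<lambda>(i, j). Gv x y k i j))"
  then have i: "i < n" and j: "j < n" by auto
  have dP: "degree (Pp x y k i) < n" using Pp_deg[of x y k i] i by linarith
  have dQ: "degree (Qc x y j) < n" using Qc_deg[of x y j] j by linarith
  have "(Lm x y k n * Hm x y k n * Um x y n) $$ (i, j) =
     (\<Sum>m = 0..<n. (\<Sum>l = 0..<n. coeff (Pp x y k i) l * Ppos_total x y (l + m) k) * coeff (Qc x y j) m)"
    using i j by (simp add: Lm_def Hm_def Um_def scalar_prod_def)
  also have "\<dots> = (\<Sum>m = 0..<n. \<Sum>l = 0..<n. coeff (Pp x y k i) l * coeff (Qc x y j) m * (Cop x y ^^ (l + m)) ones k)"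
    unfolding sum_distrib_right by (rule sum.cong, simp, rule sum.cong, simp, simp add: Ppos_total_Cop ones_def mult_ac)
  also have "\<dots> = (\<Sum>l = 0..<n. \<Sum>m = 0..<n. coeff (Pp x y k i) l * coeff (Qc x y j) m * (Cop x y ^^ (l + m)) ones k)"
    by (rule sum.swap)
  also have "\<dots> = (\<Sum>l<n. \<Sum>m<n. coeff (Pp x y k i) l * coeff (Qc x y j) m * (Cop x y ^^ (l + m)) ones k)"
    by (simp only: lessThan_atLeast0)
  also have "\<dots> = Gv x y k i j" unfolding Gv_def by (rule opoly_compose[OF dP dQ, symmetric])
  finally show "(Lm x y k n * Hm x y k n * Um x y n) $$ (i, j) = mat n n (\<lambda>(i, j). Gv x y k i j) $$ (i, j)"
    using i j by simp
qed (auto simp: Lm_def Hm_def Um_def)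

lemma det_Hm_Gv: "det (Hm x y k n) = det (mat n n (\<lambda>(i, j). Gv x y k i j))"
proof -
  have c: "Lm x y k n \<in> carrier_mat n n" "Hm x y k n \<in> carrier_mat n n" "Um x y n \<in> carrier_mat n n"
    by (auto simp: Lm_def Hm_def Um_def)
  have "det (mat n n (\<lambda>(i, j). Gv x y k i j)) = det (Lm x y k n * Hm x y k n * Um x y n)" by (simp add: LHU)
  also have "\<dots> = det (Lm x y k n) * det (Hm x y k n) * det (Um x y n)"
    using c by (simp add: det_mult[of _ n])
  finally show ?thesis by (simp add: det_Lm det_Um)
qed

lemma Gv_0: assumes "i < n" shows "Gv x y k i 0 = (\<Sum>h = 0..k + n. rc k (x * y) i h)"
proof -
  have "k + degree (Pp x y k i) \<le> k + n" using Pp_deg[of x y k i] assms by simp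
  then show ?thesis unfolding Gv_def Qc.simps opoly_one
    by (simp add: opoly_one_sum rr_rc[symmetric] rr_def)
qed

lemma Gv_Suc: "Gv x y k i (Suc j) = - ((x * y) ^ Suc j) * rc k (x * y) i j"
  unfolding Gv_def opoly_Qc opoly_vsmult rr_rc[symmetric] rr_def ..



definition Xm :: "nat \<Rightarrow> 'a::comm_ring_1 \<Rightarrow> nat \<Rightarrow> 'a mat" where
  "Xm k t n = mat n n (\<lambda>(i, c). if c < n - 1 then rc k t i c else (\<Sum>h = n - 1..k + n. rc k t i h))"
definition Em :: "'a::comm_ring_1 \<Rightarrow> nat \<Rightarrow> 'a mat" where
  "Em t n = mat n n (\<lambda>(c, j). if j = 0 then 1 else if c = j - 1 then - (t ^ j) else 0)"

lemma GXE: assumes n: "n \<ge> 1"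
  shows "mat n n (\<lambda>(i, j). Gv x y k i j) = Xm k (x * y) n * Em (x * y) n"
proof (rule eq_matI)
  fix i j assume "i < dim_row (Xm k (x * y) n * Em (x * y) n)" "j < dim_col (Xm k (x * y) n * Em (x * y) n)"
  then have i: "i < n" and j: "j < n" by (auto simp: Xm_def Em_def)
  obtain m where m: "n = Suc m" using n by (cases n) auto
  have XE: "(Xm k (x * y) n * Em (x * y) n) $$ (i, j) =
     (\<Sum>c = 0..<n. Xm k (x * y) n $$ (i, c) * Em (x * y) n $$ (c, j))"
    using i j by (simp add: Xm_def Em_def scalar_prod_def)
  show "mat n n (\<lambda>(i, j). Gv x y k i j) $$ (i, j) = (Xm k (x * y) n * Em (x * y) n) $$ (i, j)"
  proof (cases j)
    case 0
    have "(\<Sum>c = 0..<n. Xm k (x * y) n $$ (i, c) * Em (x * y) n $$ (c, j)) =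
       (\<Sum>c = 0..<m. rc k (x * y) i c) + (\<Sum>h = m..k + n. rc k (x * y) i h)"
      unfolding m using i 0 m by (simp add: Xm_def Em_def)
    also have "\<dots> = (\<Sum>h = 0..k + n. rc k (x * y) i h)"
    proof -
      have "(\<Sum>h = m..k + n. rc k (x * y) i h) = (\<Sum>h = m..<Suc (k + n). rc k (x * y) i h)"
        by (simp add: atLeastLessThanSuc_atLeastAtMost)
      moreover have "(\<Sum>h = 0..k + n. rc k (x * y) i h) = (\<Sum>h = 0..<Suc (k + n). rc k (x * y) i h)"
        by (simp add: atLeastLessThanSuc_atLeastAtMost)
      moreover have "(\<Sum>c = 0..<m. rc k (x * y) i c) + (\<Sum>h = m..<Suc (k + n). rc k (x * y) i h)
          = (\<Sum>h = 0..<Suc (k + n). rc k (x * y) i h)"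
        by (rule sum.atLeastLessThan_concat) (use m in auto)
      ultimately show ?thesis by simp
    qed
    finally show ?thesis using XE i 0 by (simp add: Gv_0)
  next
    case (Suc j')
    have "(\<Sum>c = 0..<n. Xm k (x * y) n $$ (i, c) * Em (x * y) n $$ (c, j)) =
       (\<Sum>c = 0..<n. if c = j' then Xm k (x * y) n $$ (i, c) * (- ((x * y) ^ j)) else 0)"
      by (rule sum.cong) (use Suc j in \<open>auto simp: Em_def\<close>)
    also have "\<dots> = Xm k (x * y) n $$ (i, j') * (- ((x * y) ^ j))"
      using j Suc by (simp add: sum.delta)
    also have "\<dots> = - ((x * y) ^ j) * rc k (x * y) i j'"
      using i j Suc by (simp add: Xm_def)
    finally show ?thesis using XE i j Suc by (simp add: Gv_Suc)
  qed
qed (auto simp: Xm_def Em_def)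

lemma sum_Suc_choose: "(\<Sum>j<m. Suc j) = Suc m choose 2"
  by (induction m) (auto simp: numeral_2_eq_2)

lemma det_Em: assumes n: "n \<ge> 1" shows "det (Em t n) = t ^ (n choose 2)"
proof -
  obtain m where m: "n = Suc m" using n by (cases n) auto
  have c: "Em t n \<in> carrier_mat n n" by (simp add: Em_def)
  have "det (Em t n) = (\<Sum>j<n. Em t n $$ (m, j) * cofactor (Em t n) m j)"
    by (rule laplace_expansion_row[OF c]) (simp add: m)
  also have "\<dots> = (\<Sum>j<n. if j = 0 then cofactor (Em t n) m 0 else 0)"
    by (rule sum.cong) (auto simp: Em_def m)
  also have "\<dots> = cofactor (Em t n) m 0" using n by (simp add: sum.delta)
  also have "\<dots> = (-1) ^ m * det (mat_delete (Em t n) m 0)" by (simp add: cofactor_def)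
  also have "mat_delete (Em t n) m 0 = mat m m (\<lambda>(i, j). if i = j then - (t ^ Suc j) else 0)"
    by (rule eq_matI) (auto simp: mat_delete_def Em_def m)
  also have "det (mat m m (\<lambda>(i, j). if i = j then - (t ^ Suc j) else 0)) = (\<Prod>j = 0..<m. - (t ^ Suc j))"
    by (subst det_upper_triangular[of _ m]) (auto simp: prod_list_diag_prod)
  also have "(\<Prod>j = 0..<m. - (t ^ Suc j)) = (-1) ^ m * t ^ (\<Sum>j<m. Suc j)"
  proof -
    have "(\<Prod>j = 0..<m. - (t ^ Suc j)) = (\<Prod>j = 0..<m. (-1) * t ^ Suc j)" by simp
    also have "\<dots> = (\<Prod>j = 0..<m. (-1::'a)) * (\<Prod>j = 0..<m. t ^ Suc j)" by (rule prod.distrib)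
    also have "\<dots> = (-1) ^ m * t ^ (\<Sum>j<m. Suc j)" by (simp add: power_sum lessThan_atLeast0)
    finally show ?thesis .
  qed
  finally show ?thesis by (simp add: sum_Suc_choose m flip: mult.assoc power_add)
qed



lemma lo0_ge: "j < 2 * k + 2 \<Longrightarrow> h \<ge> k \<Longrightarrow> lo0 k t j h = 0"
  by (auto simp: lo0_def)

lemma lo_ge: "h \<ge> k \<Longrightarrow> lo k t i h = 0"
  unfolding lo_def by (simp add: lo0_ge)

lemma BL:
  fixes L :: "nat \<Rightarrow> nat \<Rightarrow> 'a::comm_ring_1"
  assumes "\<And>i c. c \<ge> k \<Longrightarrow> L i c = 0"
  shows "det (mat (a + k + 1) (a + k + 1) (\<lambda>(i, c). (if c = min (k + i) (a + k) then 1 else 0) + L i c)) =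
    (-1) ^ (k * a) * det (mat (k + 1) (k + 1) (\<lambda>(i, c). if c < k then L (a + i) c else 1))"
  using assms
proof (induction a arbitrary: L)
  case 0
  have "mat (0 + k + 1) (0 + k + 1) (\<lambda>(i, c). (if c = min (k + i) (0 + k) then 1 else 0) + L i c) =
        mat (k + 1) (k + 1) (\<lambda>(i, c). if c < k then L (0 + i) c else 1)"
    by (rule eq_matI) (auto simp: 0)
  then show ?case by simp
next
  case (Suc a)
  let ?N = "Suc a + k + 1"
  let ?M = "mat ?N ?N (\<lambda>(i, c). (if c = min (k + i) (Suc a + k) then 1 else 0) + L i c :: 'a)"
  have cM: "?M \<in> carrier_mat ?N ?N" by simp
  have "det ?M = (\<Sum>i<?N. ?M $$ (i, k) * cofactor ?M i k)"
    by (rule laplace_expansion_column[OF cM]) simp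
  also have "\<dots> = (\<Sum>i<?N. if i = 0 then cofactor ?M 0 k else 0)"
    by (rule sum.cong) (auto simp: Suc.prems)
  also have "\<dots> = cofactor ?M 0 k" by (simp add: sum.delta)
  also have "\<dots> = (-1) ^ k * det (mat_delete ?M 0 k)" by (simp add: cofactor_def)
  also have "mat_delete ?M 0 k = mat (a + k + 1) (a + k + 1)
      (\<lambda>(i, c). (if c = min (k + i) (a + k) then 1 else 0) + (if c < k then L (Suc i) c else 0))"
    by (rule eq_matI) (auto simp: mat_delete_def Suc.prems)
  also have "det \<dots> = (-1) ^ (k * a) *
      det (mat (k + 1) (k + 1) (\<lambda>(i, c). if c < k then (if c < k then L (Suc (a + i)) c else 0) else 1))"
    using Suc.IH[of "\<lambda>i c. if c < k then L (Suc i) c else 0"] by simp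
  also have "mat (k + 1) (k + 1) (\<lambda>(i, c). if c < k then (if c < k then L (Suc (a + i)) c else 0) else 1) =
      mat (k + 1) (k + 1) (\<lambda>(i, c). if c < k then L (Suc a + i) c else 1)"
    by (rule eq_matI) auto
  finally show ?case by (simp add: power_add mult.assoc)
qed

lemma AD:
  fixes f :: "nat \<Rightarrow> 'a::comm_ring_1"
  shows "det (mat m m (\<lambda>(i, j). if i + j = m - 1 then f i else 0)) = (-1) ^ (m choose 2) * (\<Prod>i<m. f i)"
proof (induction m arbitrary: f)
  case 0
  then show ?case by (simp add: det_def numeral_2_eq_2)
next
  case (Suc m)
  let ?A = "mat (Suc m) (Suc m) (\<lambda>(i, j). if i + j = Suc m - 1 then f i else 0)"
  have cA: "?A \<in> carrier_mat (Suc m) (Suc m)" by simp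
  have "det ?A = (\<Sum>j<Suc m. ?A $$ (0, j) * cofactor ?A 0 j)"
    by (rule laplace_expansion_row[OF cA]) simp
  also have "\<dots> = (\<Sum>j<Suc m. if j = m then f 0 * cofactor ?A 0 m else 0)"
    by (rule sum.cong) auto
  also have "\<dots> = f 0 * cofactor ?A 0 m" by (simp add: sum.delta)
  also have "cofactor ?A 0 m = (-1) ^ m * det (mat_delete ?A 0 m)" by (simp add: cofactor_def)
  also have "mat_delete ?A 0 m = mat m m (\<lambda>(i, j). if i + j = m - 1 then f (Suc i) else 0)"
    by (rule eq_matI) (auto simp: mat_delete_def)
  also have "det \<dots> = (-1) ^ (m choose 2) * (\<Prod>i<m. f (Suc i))" by (rule Suc.IH)
  finally have "det ?A = (-1) ^ (m + (m choose 2)) * (f 0 * (\<Prod>i<m. f (Suc i)))"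
    by (simp add: power_add algebra_simps)
  moreover have "m + (m choose 2) = Suc m choose 2"
    using sum_Suc_choose[of m] sum_Suc_choose[of "m - 1"] by (cases m) (auto simp: numeral_2_eq_2)
  moreover have "f 0 * (\<Prod>i<m. f (Suc i)) = (\<Prod>i<Suc m. f i)" by (simp only: prod.lessThan_Suc_shift)
  ultimately show ?case by simp
qed



lemma lo_block: assumes "r < 2 * k + 2" shows "lo k t (P * (2 * k + 2) + r) h = t ^ (P * (k + 1)) * lo0 k t r h"
proof -
  have gen: "r < (q::nat) \<Longrightarrow> (P * q + r) div q = P \<and> (P * q + r) mod q = r" for q by auto
  have d: "(P * (2 * k + 2) + r) div (2 * k + 2) = P" "(P * (2 * k + 2) + r) mod (2 * k + 2) = r"
    using gen[OF assms] by blast+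
  show ?thesis unfolding lo_def d ..
qed

lemma Xm_form: assumes "n \<ge> k + 1"
  shows "Xm k t n = mat (n - k - 1 + k + 1) (n - k - 1 + k + 1)
     (\<lambda>(i, c). (if c = min (k + i) (n - k - 1 + k) then 1 else 0) + lo k t i c)"
proof (rule eq_matI)
  fix i c assume "i < dim_row (mat (n - k - 1 + k + 1) (n - k - 1 + k + 1)
     (\<lambda>(i, c). (if c = min (k + i) (n - k - 1 + k) then 1 else 0) + lo k t i c))"
    "c < dim_col (mat (n - k - 1 + k + 1) (n - k - 1 + k + 1)
     (\<lambda>(i, c). (if c = min (k + i) (n - k - 1 + k) then 1 else 0) + lo k t i c))"
  then have i: "i < n" and c: "c < n" using assms by auto
  have nk: "n - k - 1 + k + 1 = n" "n - k - 1 + k = n - 1" using assms by auto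
  show "Xm k t n $$ (i, c) = mat (n - k - 1 + k + 1) (n - k - 1 + k + 1)
     (\<lambda>(i, c). (if c = min (k + i) (n - k - 1 + k) then 1 else 0) + lo k t i c) $$ (i, c)"
  proof (cases "c < n - 1")
    case True
    then show ?thesis using i c unfolding nk by (auto simp: Xm_def rc_def)
  next
    case False
    then have cn: "c = n - 1" using c by simp
    have "(\<Sum>h = n - 1..k + n. rc k t i h) = (\<Sum>h = n - 1..k + n. if h = k + i then 1 else 0)"
      by (rule sum.cong) (use assms in \<open>auto simp: rc_def lo_ge\<close>)
    also have "\<dots> = (if k + i \<in> {n - 1..k + n} then 1 else 0)" by (rule sum.delta) simp
    finally show ?thesis using i c cn assms unfolding nk by (auto simp: Xm_def lo_ge)
  qed
qed (use assms in \<open>auto simp: Xm_def\<close>)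

definition Bm :: "nat \<Rightarrow> 'a::comm_ring_1 \<Rightarrow> nat \<Rightarrow> 'a mat" where
  "Bm k t a = mat (k + 1) (k + 1) (\<lambda>(i, c). if c < k then lo k t (a + i) c else 1)"

lemma detXm_B: assumes "n \<ge> k + 1"
  shows "det (Xm k t n) = (-1) ^ (k * (n - k - 1)) * det (Bm k t (n - k - 1))"
  unfolding Xm_form[OF assms] Bm_def by (rule BL) (simp add: lo_ge)

lemma lo_zero_row: "lo k t ((k + 1) * P) c = 0"
proof -
  obtain M where "P = 2 * M \<or> P = 2 * M + 1" by (metis odd_two_times_div_two_succ dvd_mult_div_cancel)
  then show ?thesis
  proof
    assume "P = 2 * M"
    then have "(k + 1) * P = M * (2 * k + 2) + 0" by (simp add: algebra_simps)
    then show ?thesis using lo_block[where r=0 and k=k and P=M and t=t and h=c] by (simp add: lo0_def)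
  next
    assume "P = 2 * M + 1"
    then have "(k + 1) * P = M * (2 * k + 2) + (k + 1)" by (simp add: algebra_simps)
    then show ?thesis using lo_block[where r="k+1" and k=k and P=M and t=t and h=c] by (simp add: lo0_def)
  qed
qed

definition Dm :: "nat \<Rightarrow> 'a::comm_ring_1 \<Rightarrow> nat \<Rightarrow> 'a mat" where
  "Dm k t P = mat k k (\<lambda>(i, c). lo k t ((k + 1) * P + Suc i) c)"

lemma detB_A':
  assumes z: "\<And>c. lo k t a c = 0"
  shows "det (Bm k t a) = (-1) ^ k * det (mat k k (\<lambda>(i, c). lo k t (a + Suc i) c))"
proof -
  let ?B = "Bm k t a"
  have cB: "?B \<in> carrier_mat (k + 1) (k + 1)" by (simp add: Bm_def)
  have "det ?B = (\<Sum>c<k + 1. ?B $$ (0, c) * cofactor ?B 0 c)"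
    by (rule laplace_expansion_row[OF cB]) simp
  also have "\<dots> = (\<Sum>c<k + 1. if c = k then cofactor ?B 0 k else 0)"
    by (rule sum.cong) (auto simp: Bm_def z)
  also have "\<dots> = cofactor ?B 0 k" by (simp add: sum.delta)
  also have "\<dots> = (-1) ^ k * det (mat_delete ?B 0 k)" by (simp add: cofactor_def)
  also have "mat_delete ?B 0 k = mat k k (\<lambda>(i, c). lo k t (a + Suc i) c)"
    by (rule eq_matI) (auto simp: mat_delete_def Bm_def)
  finally show ?thesis .
qed

lemma detB_A: "det (Bm k t ((k + 1) * P)) = (-1) ^ k * det (Dm k t P)"
  unfolding Dm_def by (rule detB_A') (rule lo_zero_row)

lemma detB_B':
  assumes z: "\<And>c. lo k t (a + k) c = 0"
  shows "det (Bm k t a) = det (mat k k (\<lambda>(i, c). lo k t (a + i) c))"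
proof -
  let ?B = "Bm k t a"
  have cB: "?B \<in> carrier_mat (k + 1) (k + 1)" by (simp add: Bm_def)
  have "det ?B = (\<Sum>c<k + 1. ?B $$ (k, c) * cofactor ?B k c)"
    by (rule laplace_expansion_row[OF cB]) simp
  also have "\<dots> = (\<Sum>c<k + 1. if c = k then cofactor ?B k k else 0)"
    by (rule sum.cong) (auto simp: Bm_def z)
  also have "\<dots> = cofactor ?B k k" by (simp add: sum.delta)
  also have "\<dots> = det (mat_delete ?B k k)" by (simp add: cofactor_def)
  also have "mat_delete ?B k k = mat k k (\<lambda>(i, c). lo k t (a + i) c)"
    by (rule eq_matI) (auto simp: mat_delete_def Bm_def)
  finally show ?thesis .
qed

lemma detB_B: "det (Bm k t ((k + 1) * P + 1)) = det (Dm k t P)"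
proof -
  have z: "lo k t ((k + 1) * P + 1 + k) c = 0" for c
  proof -
    have "(k + 1) * P + 1 + k = (k + 1) * Suc P" by simp
    then show ?thesis by (simp only: lo_zero_row)
  qed
  have "det (Bm k t ((k + 1) * P + 1)) = det (mat k k (\<lambda>(i, c). lo k t ((k + 1) * P + 1 + i) c))"
    by (rule detB_B') (rule z)
  also have "mat k k (\<lambda>(i, c). lo k t ((k + 1) * P + 1 + i) c) = Dm k t P"
    unfolding Dm_def by (rule eq_matI) auto
  finally show ?thesis .
qed

lemma detD_even: "det (Dm k t (2 * M)) = (-1) ^ (k choose 2) * t ^ (k * (M * (k + 1)) + (Suc k choose 2))"
proof -
  have e: "Dm k t (2 * M) = mat k k (\<lambda>(i, c). if i + c = k - 1 then t ^ (M * (k + 1) + Suc i) else 0)"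
  proof (rule eq_matI)
    fix i c assume "i < dim_row (mat k k (\<lambda>(i, c). if i + c = k - 1 then t ^ (M * (k + 1) + Suc i) else 0))"
      "c < dim_col (mat k k (\<lambda>(i, c). if i + c = k - 1 then t ^ (M * (k + 1) + Suc i) else 0))"
    then have ic: "i < k" "c < k" by auto
    have e: "(k + 1) * (2 * M) + Suc i = M * (2 * k + 2) + Suc i" by (simp add: algebra_simps)
    have "lo k t ((k + 1) * (2 * M) + Suc i) c = t ^ (M * (k + 1)) * lo0 k t (Suc i) c"
      unfolding e by (rule lo_block) (use ic in simp)
    then show "Dm k t (2 * M) $$ (i, c) = mat k k (\<lambda>(i, c). if i + c = k - 1 then t ^ (M * (k + 1) + Suc i) else 0) $$ (i, c)"
      using ic by (auto simp: Dm_def lo0_def power_add)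
  qed (auto simp: Dm_def)
  have "det (Dm k t (2 * M)) = (-1) ^ (k choose 2) * (\<Prod>i<k. t ^ (M * (k + 1) + Suc i))"
    unfolding e by (rule AD)
  also have "(\<Prod>i<k. t ^ (M * (k + 1) + Suc i)) = t ^ (\<Sum>i<k. M * (k + 1) + Suc i)"
    by (simp add: power_sum)
  also have "(\<Sum>i<k. M * (k + 1) + Suc i) = k * (M * (k + 1)) + (Suc k choose 2)"
    unfolding sum.distrib sum_Suc_choose by simp
  finally show ?thesis .
qed

lemma detD_odd: "det (Dm k t (2 * M + 1)) = (-1) ^ k * t ^ (k * ((M + 1) * (k + 1)))"
proof -
  have e: "Dm k t (2 * M + 1) = mat k k (\<lambda>(i, c). if i = c then - (t ^ ((M + 1) * (k + 1))) else 0)"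
  proof (rule eq_matI)
    fix i c assume "i < dim_row (mat k k (\<lambda>(i, c). if i = c then - (t ^ ((M + 1) * (k + 1))) else 0))"
      "c < dim_col (mat k k (\<lambda>(i, c). if i = c then - (t ^ ((M + 1) * (k + 1))) else 0))"
    then have ic: "i < k" "c < k" by auto
    have e: "(k + 1) * (2 * M + 1) + Suc i = M * (2 * k + 2) + (k + 2 + i)" by (simp add: algebra_simps)
    have "lo k t ((k + 1) * (2 * M + 1) + Suc i) c = t ^ (M * (k + 1)) * lo0 k t (k + 2 + i) c"
      unfolding e by (rule lo_block) (use ic in simp)
    also have "lo0 k t (k + 2 + i) c = (if i = c then - (t ^ (k + 1)) else 0)"
      by (auto simp: lo0_def)
    also have "t ^ (M * (k + 1)) * (if i = c then - (t ^ (k + 1)) else 0) =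
       (if i = c then - (t ^ ((M + 1) * (k + 1))) else 0)"
    proof -
      have "t ^ (M * (k + 1)) * t ^ (k + 1) = t ^ ((M + 1) * (k + 1))"
        by (simp only: power_add[symmetric]) (simp add: algebra_simps)
      then show ?thesis by simp
    qed
    finally show "Dm k t (2 * M + 1) $$ (i, c) = mat k k (\<lambda>(i, c). if i = c then - (t ^ ((M + 1) * (k + 1))) else 0) $$ (i, c)"
      using ic by (simp add: Dm_def)
  qed (auto simp: Dm_def)
  have "det (Dm k t (2 * M + 1)) = prod_list (diag_mat (mat k k (\<lambda>(i, c). if i = c then - (t ^ ((M + 1) * (k + 1))) else 0)))"
    unfolding e by (rule det_upper_triangular[of _ k]) auto
  also have "\<dots> = (\<Prod>i = 0..<k. - (t ^ ((M + 1) * (k + 1))))"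
    unfolding prod_list_diag_prod by simp
  also have "\<dots> = (- (t ^ ((M + 1) * (k + 1)))) ^ k" by simp
  also have "\<dots> = (-1) ^ k * (t ^ ((M + 1) * (k + 1))) ^ k" by (rule power_minus)
  also have "(t ^ ((M + 1) * (k + 1))) ^ k = t ^ (k * ((M + 1) * (k + 1)))"
    by (simp only: power_mult[symmetric] mult.commute)
  finally show ?thesis .
qed



lemma ch2_int: "2 * int (m choose 2) = int m * int m - int m"
proof (induction m)
  case 0 then show ?case by (simp add: numeral_2_eq_2)
next
  case (Suc m)
  have "Suc m choose 2 = (m choose 1) + (m choose 2)"
    by (simp add: numeral_2_eq_2)
  then show ?case using Suc by (simp add: algebra_simps)
qed

lemma key:
  fixes cn cK cr X N A B C k' :: int
  assumes "2 * cn = A" "2 * cK = B" "2 * cr = C" "A + 2 * X + B + 2 * N = (k' + 1)^2 * C"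
  shows "cn + (X + cK) + N = (k' + 1)^2 * cr"
proof -
  have "2 * (cn + (X + cK) + N) = A + 2 * X + B + 2 * N" using assms(1,2) by (simp add: distrib_left)
  also have "\<dots> = (k' + 1)^2 * C" by (rule assms(4))
  also have "\<dots> = 2 * ((k' + 1)^2 * cr)" unfolding assms(3)[symmetric] by simp
  finally show ?thesis by simp
qed

lemma E_A_even: "((k + 1) * (2 * M + 1) choose 2) + (k * (M * (k + 1)) + (Suc k choose 2)) + (k + 1) * (2 * M + 1)
   = (k + 1)^2 * ((2 * M + 1 + 1) choose 2)"
proof -
  have "int (((k + 1) * (2 * M + 1) choose 2) + (k * (M * (k + 1)) + (Suc k choose 2)) + (k + 1) * (2 * M + 1))
     = int ((k + 1)^2 * ((2 * M + 1 + 1) choose 2))"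
    unfolding of_nat_add of_nat_mult of_nat_power of_nat_1
    by (rule key[OF ch2_int ch2_int ch2_int]) (simp add: algebra_simps power2_eq_square)
  then show ?thesis by (simp only: of_nat_eq_iff)
qed


lemma key2:
  fixes cn cr X N A C k' :: int
  assumes "2 * cn = A" "2 * cr = C" "A + 2 * X + 2 * N = (k' + 1)^2 * C"
  shows "cn + X + N = (k' + 1)^2 * cr"
proof -
  have "2 * (cn + X + N) = A + 2 * X + 2 * N" using assms(1) by (simp add: distrib_left)
  also have "\<dots> = (k' + 1)^2 * C" by (rule assms(3))
  also have "\<dots> = 2 * ((k' + 1)^2 * cr)" unfolding assms(2)[symmetric] by simp
  finally show ?thesis by simp
qed

lemma key3:
  fixes cn cK cr X A B C k' :: int
  assumes "2 * cn = A" "2 * cK = B" "2 * cr = C" "A + 2 * X + B = (k' + 1)^2 * C"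
  shows "cn + (X + cK) = (k' + 1)^2 * cr"
proof -
  have "2 * (cn + (X + cK)) = A + 2 * X + B" using assms(1,2) by (simp add: distrib_left)
  also have "\<dots> = (k' + 1)^2 * C" by (rule assms(4))
  also have "\<dots> = 2 * ((k' + 1)^2 * cr)" unfolding assms(3)[symmetric] by simp
  finally show ?thesis by simp
qed

lemma key4:
  fixes cn cr X A C k' :: int
  assumes "2 * cn = A" "2 * cr = C" "A + 2 * X = (k' + 1)^2 * C"
  shows "cn + X = (k' + 1)^2 * cr"
proof -
  have "2 * (cn + X) = A + 2 * X" using assms(1) by (simp add: distrib_left)
  also have "\<dots> = (k' + 1)^2 * C" by (rule assms(3))
  also have "\<dots> = 2 * ((k' + 1)^2 * cr)" unfolding assms(2)[symmetric] by simp
  finally show ?thesis by simp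
qed

lemma E_A_odd: "((k + 1) * (2 * M + 2) choose 2) + k * ((M + 1) * (k + 1)) + (k + 1) * (2 * M + 2)
   = (k + 1)^2 * ((2 * M + 2 + 1) choose 2)"
proof -
  have "int (((k + 1) * (2 * M + 2) choose 2) + k * ((M + 1) * (k + 1)) + (k + 1) * (2 * M + 2))
     = int ((k + 1)^2 * ((2 * M + 2 + 1) choose 2))"
    unfolding of_nat_add of_nat_mult of_nat_power of_nat_1
    by (rule key2[OF ch2_int ch2_int]) (simp add: algebra_simps power2_eq_square)
  then show ?thesis by (simp only: of_nat_eq_iff)
qed

lemma E_B_even: "((k + 1) * (2 * M + 1) + 1 choose 2) + (k * (M * (k + 1)) + (Suc k choose 2))
   = (k + 1)^2 * ((2 * M + 1 + 1) choose 2)"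
proof -
  have "int (((k + 1) * (2 * M + 1) + 1 choose 2) + (k * (M * (k + 1)) + (Suc k choose 2)))
     = int ((k + 1)^2 * ((2 * M + 1 + 1) choose 2))"
    unfolding of_nat_add of_nat_mult of_nat_power of_nat_1
    by (rule key3[OF ch2_int ch2_int ch2_int]) (simp add: algebra_simps power2_eq_square)
  then show ?thesis by (simp only: of_nat_eq_iff)
qed

lemma E_B_odd: "((k + 1) * (2 * M + 2) + 1 choose 2) + k * ((M + 1) * (k + 1))
   = (k + 1)^2 * ((2 * M + 2 + 1) choose 2)"
proof -
  have "int (((k + 1) * (2 * M + 2) + 1 choose 2) + k * ((M + 1) * (k + 1)))
     = int ((k + 1)^2 * ((2 * M + 2 + 1) choose 2))"
    unfolding of_nat_add of_nat_mult of_nat_power of_nat_1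
    by (rule key4[OF ch2_int ch2_int]) (simp add: algebra_simps power2_eq_square)
  then show ?thesis by (simp only: of_nat_eq_iff)
qed

lemma m1pow: "even (m1 + m2) \<Longrightarrow> (-1 :: 'a::comm_ring_1) ^ m1 = (-1) ^ m2"
  by (metis even_add minus_one_power_iff)

lemma choose2_Suc: "Suc k choose 2 = k + (k choose 2)"
  by (simp add: numeral_2_eq_2)



lemma det_zero_col:
  assumes A: "A \<in> carrier_mat m m" and c: "c < m" and z: "\<And>i. i < m \<Longrightarrow> A $$ (i, c) = 0"
  shows "det A = 0"
proof -
  have "det A = (\<Sum>i<m. A $$ (i, c) * cofactor A i c)" by (rule laplace_expansion_column[OF A c])
  also have "\<dots> = 0" using z by simp
  finally show ?thesis .
qed

lemma det_zero_row:
  assumes A: "A \<in> carrier_mat m m" and r: "r < m" and z: "\<And>j. j < m \<Longrightarrow> A $$ (r, j) = 0"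
  shows "det A = 0"
proof -
  have "det A = (\<Sum>j<m. A $$ (r, j) * cofactor A r j)" by (rule laplace_expansion_row[OF A r])
  also have "\<dots> = 0" using z by simp
  finally show ?thesis .
qed

lemma Z1: assumes n: "n \<ge> k + 1" and s2: "2 \<le> n mod (k + 1)"
  shows "det (Bm k t (n - k - 1)) = 0"
proof -
  define s where "s = n mod (k + 1)"
  define M where "M = n div (k + 1)"
  have nM: "n = (k + 1) * M + s" unfolding s_def M_def by (metis div_mult_mod_eq mult.commute)
  have sk: "s \<le> k" unfolding s_def using mod_less_divisor[of "k + 1" n] by linarith
  have s2': "2 \<le> s" using s2 unfolding s_def .
  have M1: "M \<ge> 1" using n nM sk by (cases M) auto
  have a: "n - k - 1 = (k + 1) * (M - 1) + s" using nM M1 by (cases M) (auto simp: algebra_simps)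
  obtain c0 where c0: "c0 < k" and zc: "\<And>i. i \<le> k \<Longrightarrow> lo k t ((k + 1) * (M - 1) + s + i) c0 = 0"
  proof -
    obtain P where "M - 1 = 2 * P \<or> M - 1 = 2 * P + 1"
      by (metis odd_two_times_div_two_succ dvd_mult_div_cancel)
    then show ?thesis
    proof
      assume P: "M - 1 = 2 * P"
      show ?thesis
      proof (rule that[of "k - 1"])
        show "k - 1 < k" using sk s2' by simp
        fix i assume i: "i \<le> k"
        have e: "(k + 1) * (M - 1) + s + i = P * (2 * k + 2) + (s + i)" unfolding P by (simp add: algebra_simps)
        have "lo k t ((k + 1) * (M - 1) + s + i) (k - 1) = t ^ (P * (k + 1)) * lo0 k t (s + i) (k - 1)"
          unfolding e by (rule lo_block) (use i sk in simp)
        also have "lo0 k t (s + i) (k - 1) = 0" using i sk s2' by (auto simp: lo0_def)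
        finally show "lo k t ((k + 1) * (M - 1) + s + i) (k - 1) = 0" by simp
      qed
    next
      assume P: "M - 1 = 2 * P + 1"
      show ?thesis
      proof (rule that[of 0])
        show "0 < k" using sk s2' by simp
        fix i assume i: "i \<le> k"
        show "lo k t ((k + 1) * (M - 1) + s + i) 0 = 0"
        proof (cases "k + 1 + s + i < 2 * k + 2")
          case True
          have e: "(k + 1) * (M - 1) + s + i = P * (2 * k + 2) + (k + 1 + s + i)" unfolding P by (simp add: algebra_simps)
          have "lo k t ((k + 1) * (M - 1) + s + i) 0 = t ^ (P * (k + 1)) * lo0 k t (k + 1 + s + i) 0"
            unfolding e by (rule lo_block) (use True in simp)
          also have "lo0 k t (k + 1 + s + i) 0 = 0" using i sk s2' by (auto simp: lo0_def)
          finally show ?thesis by simp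
        next
          case False
          have e: "(k + 1) * (M - 1) + s + i = Suc P * (2 * k + 2) + (s + i - (k + 1))"
            unfolding P using False by (simp add: algebra_simps)
          have "lo k t ((k + 1) * (M - 1) + s + i) 0 = t ^ (Suc P * (k + 1)) * lo0 k t (s + i - (k + 1)) 0"
            unfolding e by (rule lo_block) (use i sk in simp)
          also have "lo0 k t (s + i - (k + 1)) 0 = 0" using i sk s2' False by (auto simp: lo0_def)
          finally show ?thesis by simp
        qed
      qed
    qed
  qed
  show ?thesis
  proof (rule det_zero_col[of _ "k + 1" c0])
    show "Bm k t (n - k - 1) \<in> carrier_mat (k + 1) (k + 1)" by (simp add: Bm_def)
    show "c0 < k + 1" using c0 by simp
    fix i assume "i < k + 1"
    then show "Bm k t (n - k - 1) $$ (i, c0) = 0" using zc[of i] c0 unfolding a by (simp add: Bm_def)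
  qed
qed

lemma Z2: assumes "2 \<le> n" "n \<le> k" shows "det (Xm k t n) = 0"
proof -
  let ?X = "Xm k t n"
  have cX: "?X \<in> carrier_mat n n" by (simp add: Xm_def)
  have lo0z: "lo k t 0 h = 0" for h using lo_small[of 0 k t h] by (simp add: lo0_def)
  have lo1: "lo k t 1 h = (if h = k - 1 then t else 0)" for h
    using lo_small[of 1 k t h] assms by (auto simp: lo0_def)
  have row0: "?X $$ (0, c) = (if c = n - 1 then 1 else 0)" if c: "c < n" for c
  proof (cases "c < n - 1")
    case True then show ?thesis using c assms by (simp add: Xm_def rc_def lo0z)
  next
    case False
    have "(\<Sum>h = n - 1..k + n. rc k t 0 h) = (\<Sum>h = n - 1..k + n. if h = k then 1 else 0)"
      by (rule sum.cong) (auto simp: rc_def lo0z)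
    also have "\<dots> = 1" using assms by (subst sum.delta) auto
    finally show ?thesis using False c assms by (simp add: Xm_def)
  qed
  have "det ?X = (\<Sum>c<n. ?X $$ (0, c) * cofactor ?X 0 c)"
    by (rule laplace_expansion_row[OF cX]) (use assms in simp)
  also have "\<dots> = (\<Sum>c<n. if c = n - 1 then cofactor ?X 0 (n - 1) else 0)"
    by (rule sum.cong) (auto simp: row0)
  also have "\<dots> = cofactor ?X 0 (n - 1)" using assms by (simp add: sum.delta)
  also have "\<dots> = (-1) ^ (n - 1) * det (mat_delete ?X 0 (n - 1))" by (simp add: cofactor_def)
  also have "det (mat_delete ?X 0 (n - 1)) = 0"
  proof (rule det_zero_row[of _ "n - 1" 0])
    show "mat_delete ?X 0 (n - 1) \<in> carrier_mat (n - 1) (n - 1)" by (simp add: mat_delete_def Xm_def)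
    show "0 < n - 1" using assms by simp
    fix j assume j: "j < n - 1"
    then show "mat_delete ?X 0 (n - 1) $$ (0, j) = 0"
      using assms lo1[of j] by (auto simp: mat_delete_def Xm_def rc_def)
  qed
  finally show ?thesis by simp
qed



lemma det_H: assumes "n \<ge> 1"
  shows "det (mat n n (\<lambda>(i, j). Ppos_total x y (i + j) k)) = det (Xm k (x * y) n) * (x * y) ^ (n choose 2)"
proof -
  have "mat n n (\<lambda>(i, j). Ppos_total x y (i + j) k) = Hm x y k n" by (simp add: Hm_def)
  then have "det (mat n n (\<lambda>(i, j). Ppos_total x y (i + j) k)) = det (Xm k (x * y) n * Em (x * y) n)"
    using det_Hm_Gv[of x y k n] GXE[OF assms, of x y k] by simp
  also have "\<dots> = det (Xm k (x * y) n) * det (Em (x * y) n)"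
    by (rule det_mult[of _ n]) (auto simp: Xm_def Em_def)
  finally show ?thesis using det_Em[OF assms, of "x * y"] by simp
qed

lemma even_kk: "even (k * (k + 1 :: nat))" by auto

theorem theorem3:
  fixes x y :: "'a::comm_ring_1" and n k :: nat
  assumes "n \<ge> 1"
  shows "det (mat n n (\<lambda>(i, j). Ppos_total x y (i + j) k)) =
    (if (k + 1) dvd n then
       (let n1 = n div (k + 1) in
          (-1) ^ (n1 * ((k + 1) choose 2)) * (x * y) ^ ((k + 1)^2 * ((n1 + 1) choose 2) - n))
     else if (k + 1) dvd (n - 1) then
       (let n1 = (n - 1) div (k + 1) in
          (-1) ^ (n1 * ((k + 1) choose 2)) * (x * y) ^ ((k + 1)^2 * ((n1 + 1) choose 2)))
     else 0)"
proof -
  define t where "t = x * y"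
  define C where "C = Suc k choose 2"
  have Ck: "k + (k choose 2) = C" unfolding C_def by (simp add: choose2_Suc)
  have dH: "det (mat n n (\<lambda>(i, j). Ppos_total x y (i + j) k)) = det (Xm k t n) * t ^ (n choose 2)"
    unfolding t_def by (rule det_H[OF assms])
  show ?thesis
  proof (cases "n = 1")
    case True
    have "det (mat n n (\<lambda>(i, j). Ppos_total x y (i + j) k)) = 1"
      using True by (subst det_single) (auto simp: Ppos_total_Cop)
    then show ?thesis using True by (auto simp: numeral_2_eq_2 Let_def)
  next
    case False
    then have n2: "n \<ge> 2" using assms by simp
    show ?thesis
    proof (cases "(k + 1) dvd n")
      case True
      then obtain n1 where n1: "n = (k + 1) * n1" by (auto elim: dvdE)
      have n1p: "n1 \<ge> 1" using n1 assms by (cases n1) auto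
      have nd: "n div (k + 1) = n1" unfolding n1 by (rule div_mult_self1_is_m) simp
      have nk: "n \<ge> k + 1" using n1 n1p by (metis mult_le_mono2 mult.right_neutral)
      have a: "n - k - 1 = (k + 1) * (n1 - 1)" using n1 n1p by (cases n1) (auto simp: algebra_simps)
      have dX: "det (Xm k t n) = (-1) ^ (k * (n - k - 1)) * ((-1) ^ k * det (Dm k t (n1 - 1)))"
        unfolding detXm_B[OF nk] a detB_A ..
      obtain M where "n1 - 1 = 2 * M \<or> n1 - 1 = 2 * M + 1"
        by (metis odd_two_times_div_two_succ dvd_mult_div_cancel)
      then show ?thesis
      proof
        assume M: "n1 - 1 = 2 * M"
        then have n1M: "n1 = 2 * M + 1" using n1p by simp
        have E: "(k + 1)^2 * ((n1 + 1) choose 2) - n = (n choose 2) + (k * (M * (k + 1)) + (Suc k choose 2))"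
          using E_A_even[of k M] unfolding n1 n1M by simp
        have ev: "even (k * (n - k - 1) + (k + (k choose 2)) + n1 * C)"
        proof -
          have "k * (n - k - 1) + (k + (k choose 2)) + n1 * C = 2 * (k * (k + 1) * M + C + M * C)"
            unfolding a M Ck n1M by (simp add: algebra_simps)
          then show ?thesis by simp
        qed
        have "det (Xm k t n) * t ^ (n choose 2) =
          ((-1) ^ (k * (n - k - 1) + (k + (k choose 2)))) * t ^ ((n choose 2) + (k * (M * (k + 1)) + (Suc k choose 2)))"
          unfolding dX M detD_even by (simp add: power_add algebra_simps)
        also have "\<dots> = (-1) ^ (n1 * C) * t ^ ((k + 1)^2 * ((n1 + 1) choose 2) - n)"
          unfolding E using m1pow[OF ev, where 'a='a] by simp
        finally show ?thesis using True dH unfolding nd C_def t_def Let_def by simp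
      next
        assume M: "n1 - 1 = 2 * M + 1"
        then have n1M: "n1 = 2 * M + 2" using n1p by simp
        have E: "(k + 1)^2 * ((n1 + 1) choose 2) - n = (n choose 2) + k * ((M + 1) * (k + 1))"
          using E_A_odd[of k M] unfolding n1 n1M by simp
        have ev: "even (k * (n - k - 1) + (k + k) + n1 * C)"
        proof -
          have e: "k * (n - k - 1) + (k + k) + n1 * C = (k * (k + 1)) * (2 * M + 1) + 2 * (k + (M + 1) * C)"
            unfolding a M n1M by (simp add: algebra_simps)
          have "even ((k * (k + 1)) * (2 * M + 1) + 2 * (k + (M + 1) * C))"
            by (intro dvd_add dvd_mult2 even_kk) simp
          then show ?thesis unfolding e .
        qed
        have "det (Xm k t n) * t ^ (n choose 2) =
          ((-1) ^ (k * (n - k - 1) + (k + k))) * t ^ ((n choose 2) + k * ((M + 1) * (k + 1)))"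
          unfolding dX M detD_odd by (simp add: power_add algebra_simps)
        also have "\<dots> = (-1) ^ (n1 * C) * t ^ ((k + 1)^2 * ((n1 + 1) choose 2) - n)"
          unfolding E using m1pow[OF ev, where 'a='a] by simp
        finally show ?thesis using True dH unfolding nd C_def t_def Let_def by simp
      qed
    next
      case notdvd: False
      show ?thesis
      proof (cases "(k + 1) dvd (n - 1)")
        case True
        then obtain n1 where n1': "n - 1 = (k + 1) * n1" by (auto elim: dvdE)
        have n1: "n = (k + 1) * n1 + 1" using n1' assms by simp
        have k1: "k \<ge> 1" using notdvd by (cases k) auto
        have n1p: "n1 \<ge> 1" using n1 n2 by (cases n1) auto
        have nd: "(n - 1) div (k + 1) = n1" unfolding n1' by (rule div_mult_self1_is_m) simp
        have nk: "n \<ge> k + 1" using n1 n1p by (metis le_add1 mult_le_mono2 mult.right_neutral order.trans)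
        have a: "n - k - 1 = (k + 1) * (n1 - 1) + 1" using n1 n1p by (cases n1) (auto simp: algebra_simps)
        have dX: "det (Xm k t n) = (-1) ^ (k * (n - k - 1)) * det (Dm k t (n1 - 1))"
          unfolding detXm_B[OF nk] a detB_B ..
        obtain M where "n1 - 1 = 2 * M \<or> n1 - 1 = 2 * M + 1"
          by (metis odd_two_times_div_two_succ dvd_mult_div_cancel)
        then show ?thesis
        proof
          assume M: "n1 - 1 = 2 * M"
          then have n1M: "n1 = 2 * M + 1" using n1p by simp
          have E: "(k + 1)^2 * ((n1 + 1) choose 2) = (n choose 2) + (k * (M * (k + 1)) + (Suc k choose 2))"
            using E_B_even[of k M] unfolding n1 n1M by simp
          have ev: "even (k * (n - k - 1) + (k choose 2) + n1 * C)"
          proof -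
            have "k * (n - k - 1) + (k choose 2) + n1 * C = 2 * (k * (k + 1) * M + C + M * C)"
              unfolding a M n1M Ck[symmetric] by (simp add: algebra_simps)
            then show ?thesis by simp
          qed
          have "det (Xm k t n) * t ^ (n choose 2) =
            ((-1) ^ (k * (n - k - 1) + (k choose 2))) * t ^ ((n choose 2) + (k * (M * (k + 1)) + (Suc k choose 2)))"
            unfolding dX M detD_even by (simp add: power_add algebra_simps)
          also have "\<dots> = (-1) ^ (n1 * C) * t ^ ((k + 1)^2 * ((n1 + 1) choose 2))"
            unfolding E using m1pow[OF ev, where 'a='a] by simp
          finally show ?thesis using notdvd True dH unfolding nd C_def t_def Let_def by simp
        next
          assume M: "n1 - 1 = 2 * M + 1"
          then have n1M: "n1 = 2 * M + 2" using n1p by simp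
          have E: "(k + 1)^2 * ((n1 + 1) choose 2) = (n choose 2) + k * ((M + 1) * (k + 1))"
            using E_B_odd[of k M] unfolding n1 n1M by simp
          have ev: "even (k * (n - k - 1) + k + n1 * C)"
          proof -
            have e: "k * (n - k - 1) + k + n1 * C = (k * (k + 1)) * (2 * M + 1) + 2 * (k + (M + 1) * C)"
              unfolding a M n1M by (simp add: algebra_simps)
            have "even ((k * (k + 1)) * (2 * M + 1) + 2 * (k + (M + 1) * C))"
              by (intro dvd_add dvd_mult2 even_kk) simp
            then show ?thesis unfolding e .
          qed
          have "det (Xm k t n) * t ^ (n choose 2) =
            ((-1) ^ (k * (n - k - 1) + k)) * t ^ ((n choose 2) + k * ((M + 1) * (k + 1)))"
            unfolding dX M detD_odd by (simp add: power_add algebra_simps)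
          also have "\<dots> = (-1) ^ (n1 * C) * t ^ ((k + 1)^2 * ((n1 + 1) choose 2))"
            unfolding E using m1pow[OF ev, where 'a='a] by simp
          finally show ?thesis using notdvd True dH unfolding nd C_def t_def Let_def by simp
        qed
      next
        case notdvd1: False
        have "det (Xm k t n) = 0"
        proof (cases "n \<ge> k + 1")
          case True
          have m0: "n mod (k + 1) \<noteq> 0" using notdvd by (simp add: dvd_eq_mod_eq_0)
          have m1: "n mod (k + 1) \<noteq> 1"
          proof
            assume "n mod (k + 1) = 1"
            then have "n - 1 = (k + 1) * (n div (k + 1))" by (metis add_diff_cancel_right' div_mult_mod_eq mult.commute)
            then show False using notdvd1 by (metis dvd_triv_left)
          qed
          have m2: "2 \<le> n mod (k + 1)" using m0 m1 by linarith
          show ?thesis unfolding detXm_B[OF True] Z1[OF True m2] by simp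
        next
          case False
          then have "n \<le> k" by simp
          then show ?thesis by (rule Z2[OF n2])
        qed
        then show ?thesis using dH notdvd notdvd1 by simp
      qed
    qed
  qed
qed


end
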